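(* If a voting method $F$ satisfies ordinal margin invariance and single-voter resolvability (respectively, asymptotic resolvability), then $|F(\mathbf{P})|=1$ for every profile $\mathbf{P}$ whose ordinal margin graph is a linearly edge-ordered tournament.
   Context: Fix infinite sets $\mathcal{X}$ (alternatives) and $\mathcal{V}$ (voters). A profile $\mathbf{P}$ is a function from a nonempty finite set $V(\mathbf{P})\subseteq\mathcal{V}$ to the set of strict weak orders on a nonempty finite set $X(\mathbf{P})\subseteq\mathcal{X}$; $(x,y)\in\mathbf{P}(i)$ means voter $i$ strictly prefers $x$ to $y$. $\mathbf{P}$ is linear if every $\mathbf{P}(i)$ is a linear order. $\mathrm{Support}_\mathbf{P}(a,b)=|\{i\in V(\mathbf{P}) : (a,b)\in\mathbf{P}(i)\}|$, $\mathrm{Margin}_\mathbf{P}(x,y)=\mathrm{Support}_\mathbf{P}(x,y)-\mathrm{Support}_\mathbf{P}(y,x)$. A voting method is a function $F$ assigning to each profile $\mathbf{P}$ a nonempty $F(\mathbf{P})\subseteq X(\mathbf{P})$. Ordinal margin graph: $\mathbb{M}(\mathbf{P})=(M,\succ)$, where $M$ is the directed graph on $X(\mathbf{P})$ with an edge $x\to y$ iff $\mathrm{Margin}_\mathbf{P}(x,y)>0$, and $\succ$ is the strict weak order on edges with $(a,b)\succ(c,d)$ iff $\mathrm{Margin}_\mathbf{P}(a,b)>\mathrm{Margin}_\mathbf{P}(c,d)$. Ordinal margin invariance: $\mathbb{M}(\mathbf{P})=\mathbb{M}(\mathbf{P}')$ implies $F(\mathbf{P})=F(\mathbf{P}')$.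 A linearly edge-ordered tournament is a pair $(M,\succ)$ where $M$ is a tournament (asymmetric directed graph in which any two distinct vertices are joined by an edge in some direction) and $\succ$ is a linear order of its edges. Single-voter resolvability: for every profile $\mathbf{P}$ with $|F(\mathbf{P})|>1$ there is a profile $\mathbf{P}'$ obtained from $\mathbf{P}$ by adding exactly one new voter with $|F(\mathbf{P}')|=1$. Asymptotic resolvability: for every positive integer $m$, as the number $n$ of voters tends to infinity, the proportion of linear profiles with $m$ (fixed) alternatives and $n$ voters for which $|F(\mathbf{P})|>1$ tends to $0$. *)

theory Defs
  imports Complex_Main
begin

text \<open>Ballots of non-voters are fixed to
the empty relation so that a profile is determined by its values on V.\<close>
type_synonym ('v, 'x) profile = "'v set \<times> 'x set \<times> ('v \<Rightarrow> ('x \<times> 'x) set)"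

definition voters :: "('v, 'x) profile \<Rightarrow> 'v set" where
  "voters P = fst P"
definition alts :: "('v, 'x) profile \<Rightarrow> 'x set" where
  "alts P = fst (snd P)"
definition ballot :: "('v, 'x) profile \<Rightarrow> 'v \<Rightarrow> ('x \<times> 'x) set" where
  "ballot P = snd (snd P)"

definition strict_weak_order_on :: "'x set \<Rightarrow> ('x \<times> 'x) set \<Rightarrow> bool" where
  "strict_weak_order_on X r \<longleftrightarrow> r \<subseteq> X \<times> X
     \<and> (\<forall>x\<in>X. (x, x) \<notin> r)
     \<and> (\<forall>x\<in>X. \<forall>y\<in>X. \<forall>z\<in>X. (x, y) \<in> r \<and> (y, z) \<in> r \<longrightarrow> (x, z) \<in> r)
     \<and> (\<forall>x\<in>X. \<forall>y\<in>X. \<forall>z\<in>X. (x, y) \<in> r \<longrightarrow> (x, z) \<in> r \<or> (z, y) \<in> r)"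

definition strict_linear_order_on :: "'x set \<Rightarrow> ('x \<times> 'x) set \<Rightarrow> bool" where
  "strict_linear_order_on X r \<longleftrightarrow> strict_weak_order_on X r
     \<and> (\<forall>x\<in>X. \<forall>y\<in>X. x \<noteq> y \<longrightarrow> (x, y) \<in> r \<or> (y, x) \<in> r)"

definition is_profile :: "('v, 'x) profile \<Rightarrow> bool" where
  "is_profile P \<longleftrightarrow> finite (voters P) \<and> voters P \<noteq> {} \<and> finite (alts P) \<and> alts P \<noteq> {}
     \<and> (\<forall>i\<in>voters P. strict_weak_order_on (alts P) (ballot P i))
     \<and> (\<forall>i. i \<notin> voters P \<longrightarrow> ballot P i = {})"

definition is_linear_profile :: "('v, 'x) profile \<Rightarrow> bool" where
  "is_linear_profile P \<longleftrightarrow> is_profile P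
     \<and> (\<forall>i\<in>voters P. strict_linear_order_on (alts P) (ballot P i))"

definition support :: "('v, 'x) profile \<Rightarrow> 'x \<Rightarrow> 'x \<Rightarrow> nat" where
  "support P a b = card {i \<in> voters P. (a, b) \<in> ballot P i}"

definition margin :: "('v, 'x) profile \<Rightarrow> 'x \<Rightarrow> 'x \<Rightarrow> int" where
  "margin P x y = int (support P x y) - int (support P y x)"

definition margin_edges :: "('v, 'x) profile \<Rightarrow> ('x \<times> 'x) set" where
  "margin_edges P = {(x, y). x \<in> alts P \<and> y \<in> alts P \<and> margin P x y > 0}"

definition ordinal_margin_graph ::
  "('v, 'x) profile \<Rightarrow> 'x set \<times> ('x \<times> 'x) set \<times> (('x \<times> 'x) \<times> ('x \<times> 'x)) set" where
  "ordinal_margin_graph P =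
     (alts P, margin_edges P,
      {((a, b), (c, d)). (a, b) \<in> margin_edges P \<and> (c, d) \<in> margin_edges P
                         \<and> margin P a b > margin P c d})"

definition linearly_edge_ordered_tournament ::
  "'x set \<times> ('x \<times> 'x) set \<times> (('x \<times> 'x) \<times> ('x \<times> 'x)) set \<Rightarrow> bool" where
  "linearly_edge_ordered_tournament G \<longleftrightarrow>
     (let X = fst G; E = fst (snd G); ord = snd (snd G) in
        E \<subseteq> X \<times> X
      \<and> (\<forall>x y. (x, y) \<in> E \<longrightarrow> (y, x) \<notin> E)
      \<and> (\<forall>x\<in>X. \<forall>y\<in>X. x \<noteq> y \<longrightarrow> (x, y) \<in> E \<or> (y, x) \<in> E)
      \<and> strict_linear_order_on E ord)"

definition voting_method :: "(('v, 'x) profile \<Rightarrow> 'x set) \<Rightarrow> bool" where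
  "voting_method F \<longleftrightarrow> (\<forall>P. is_profile P \<longrightarrow> F P \<noteq> {} \<and> F P \<subseteq> alts P)"

definition ordinal_margin_invariant :: "(('v, 'x) profile \<Rightarrow> 'x set) \<Rightarrow> bool" where
  "ordinal_margin_invariant F \<longleftrightarrow>
     (\<forall>P P'. is_profile P \<and> is_profile P' \<and> ordinal_margin_graph P = ordinal_margin_graph P'
             \<longrightarrow> F P = F P')"

definition single_voter_resolvable :: "(('v, 'x) profile \<Rightarrow> 'x set) \<Rightarrow> bool" where
  "single_voter_resolvable F \<longleftrightarrow>
     (\<forall>P. is_profile P \<and> card (F P) > 1 \<longrightarrow>
        (\<exists>i r. i \<notin> voters P \<and> strict_weak_order_on (alts P) r
               \<and> card (F (insert i (voters P), alts P, (ballot P)(i := r))) = 1))"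

definition linear_profiles :: "'v set \<Rightarrow> 'x set \<Rightarrow> ('v, 'x) profile set" where
  "linear_profiles V X = {P. is_linear_profile P \<and> voters P = V \<and> alts P = X}"

text \<open>Asymptotic resolvability: for every m > 0, every set X of m alternatives and
every enumeration of voters (the voter set for n voters being the first n of them),
the proportion of linear profiles with |F P| > 1 tends to 0 as n tends to infinity.\<close>
definition asymptotically_resolvable :: "(('v, 'x) profile \<Rightarrow> 'x set) \<Rightarrow> bool" where
  "asymptotically_resolvable F \<longleftrightarrow>
     (\<forall>m::nat. \<forall>X. \<forall>vs::nat \<Rightarrow> 'v. m > 0 \<and> finite X \<and> card X = m \<and> inj vs \<longrightarrow>
        ((\<lambda>n. real (card {P \<in> linear_profiles (vs ` {..<n}) X. card (F P) > 1})
              / real (card (linear_profiles (vs ` {..<n}) X))) \<longlonglongrightarrow> 0))"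

end

theory Submission
  imports Defs "HOL-Library.FuncSet"
begin

lemma binom_step: "Suc j * (c choose Suc j) = (c - j) * (c choose j)"
  using binomial_absorb_comp[of c j] binomial_absorption[of j c] by simp

lemma real_eq_mult: "(a::nat) * b = c * d \<Longrightarrow> real a * real b = real c * real d"
  by (metis of_nat_mult)

lemma cb_odd: "Suc h * ((Suc (2*h)) choose h) = Suc (2*h) * ((2*h) choose h)"
proof -
  have b: "Suc h * ((Suc (2*h)) choose Suc h) = Suc (2*h) * ((2*h) choose h)"
    by (rule Suc_times_binomial)
  have c: "(Suc (2*h)) choose Suc h = (Suc (2*h)) choose h"
    using binomial_symmetric[of "Suc h" "Suc (2*h)"] by simp
  show ?thesis using b unfolding c .
qed

lemma cb_even_rec: "(Suc h) * ((2*Suc h) choose Suc h) = 2*(2*h+1) * ((2*h) choose h)"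
proof -
  define A where "A = ((Suc (Suc (2*h))) choose Suc h)"
  define B where "B = ((Suc (2*h)) choose h)"
  define C where "C = ((2*h) choose h)"
  have a: "Suc h * A = Suc (Suc (2*h)) * B"
    unfolding A_def B_def by (rule Suc_times_binomial)
  have o: "Suc h * B = Suc (2*h) * C" unfolding B_def C_def by (rule cb_odd)
  have "Suc h * (Suc h * A) = Suc h * (Suc (Suc (2*h)) * B)" using a by simp
  also have "\<dots> = 2 * Suc h * (Suc h * B)" by (simp add: algebra_simps)
  also have "\<dots> = Suc h * (2 * (Suc (2*h) * C))" unfolding o by (simp add: algebra_simps)
  finally have "Suc h * (Suc h * A) = Suc h * (2 * (Suc (2*h) * C))" .
  hence "Suc h * A = 2 * (Suc (2*h) * C)"
    using mult_left_cancel[of "Suc h"] by simp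
  moreover have "(2*Suc h) choose Suc h = A" unfolding A_def by (simp del: binomial_Suc_Suc)
  ultimately show ?thesis unfolding C_def by simp
qed
lemma cb_even: "h \<ge> 1 \<Longrightarrow> (16::real)^h \<le> 4 * real h * real ((2*h) choose h)^2"
proof (induction h rule: nat_induct_at_least)
  case base
  then show ?case by (simp add: numeral_eq_Suc)
next
  case (Suc h)
  define a where "a = real ((2*h) choose h)"
  define b where "b = real ((2*Suc h) choose Suc h)"
  define x where "x = real h"
  have x0: "x \<ge> 0" unfolding x_def by simp
  have r: "(x+1) * b = 2*(2*x+1) * a"
    unfolding a_def b_def x_def using real_eq_mult[OF cb_even_rec[of h]] by (simp add: algebra_simps)
  have ih: "16^h \<le> 4*x*a^2" using Suc.IH a_def x_def by simp
  have "(16::real)^Suc h * (x+1) = 16 * 16^h * (x+1)" by simp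
  also have "\<dots> \<le> 16 * (4*x*a^2) * (x+1)" using ih x0 by (intro mult_right_mono) auto
  also have "\<dots> \<le> 4 * (2*(2*x+1) * a)^2"
  proof -
    have "4 * (2*(2*x+1) * a)^2 = 16 * a^2 * (2*x+1)^2" by (simp add: power2_eq_square algebra_simps)
    moreover have "16 * (4*x*a^2) * (x+1) = 16 * a^2 * (4*x*(x+1))" by (simp add: algebra_simps)
    moreover have "4*x*(x+1) \<le> (2*x+1)^2" by (simp add: power2_eq_square algebra_simps)
    ultimately show ?thesis by (metis mult_left_mono zero_le_power2 zero_le_numeral mult_nonneg_nonneg)
  qed
  also have "\<dots> = 4 * ((x+1) * b)^2" using r by simp
  also have "\<dots> = 4 * (x+1) * b^2 * (x+1)" by (simp add: power2_eq_square algebra_simps)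
  finally have "(16::real)^Suc h * (x+1) \<le> 4 * (x+1) * b^2 * (x+1)" .
  hence "(16::real)^Suc h \<le> 4 * (x+1) * b^2" using x0 by (simp add: mult_le_cancel_right_pos)
  thus ?case unfolding b_def x_def by (simp del: binomial_Suc_Suc add: algebra_simps)
qed

lemma cb_bound: "c \<ge> 1 \<Longrightarrow> (4::real)^c \<le> 8 * real c * real (c choose (c div 2))^2"
proof -
  assume c: "c \<ge> 1"
  have "c = 2*(c div 2) \<or> c = Suc (2*(c div 2))" by presburger
  then obtain h where "c = 2*h \<or> c = Suc (2*h)" by blast
  then show ?thesis
  proof
    assume ch: "c = 2*h"
    hence h: "h \<ge> 1" using c by simp
    have "(4::real)^c = 16^h" by (simp add: ch power_mult)
    also have "\<dots> \<le> 4 * real h * real ((2*h) choose h)^2" using cb_even[OF h] .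
    also have "\<dots> \<le> 8 * real c * real (c choose (c div 2))^2" using ch by simp
    finally show ?thesis .
  next
    assume ch: "c = Suc (2*h)"
    define a where "a = real ((2*h) choose h)"
    define b where "b = real ((Suc (2*h)) choose h)"
    define x where "x = real h"
    have x0: "x \<ge> 0" unfolding x_def by simp
    have r: "(x+1) * b = (2*x+1) * a"
      unfolding a_def b_def x_def using real_eq_mult[OF cb_odd[of h]] by (simp add: algebra_simps)
    show ?thesis
    proof (cases "h = 0")
      case True then show ?thesis using ch by simp
    next
      case False
      have ev: "(16::real)^h \<le> 4 * x * a^2"
        using False cb_even[of h] a_def x_def by simp
      have "(4::real)^c * (x+1)^2 = 4 * 16^h * (x+1)^2" by (simp add: ch power_mult)
      also have "\<dots> \<le> 16 * x * a^2 * (x+1)^2" using ev by (intro mult_right_mono) auto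
      also have "\<dots> \<le> 8 * (2*x+1) * ((2*x+1) * a)^2"
      proof -
        have "8 * (2*x+1) * ((2*x+1) * a)^2 = a^2 * (8 * (2*x+1)^3)"
          by (simp add: power2_eq_square algebra_simps power3_eq_cube)
        moreover have "16 * x * a^2 * (x+1)^2 = a^2 * (16 * x * (x+1)^2)"
          by (simp add: algebra_simps)
        moreover have "16 * x * (x+1)^2 \<le> 8 * (2*x+1)^3"
        proof -
          have "8 * (2*x+1)^3 - 16 * x * (x+1)^2 = 48*x^3+64*x^2+32*x+8"
            by (simp add: algebra_simps power2_eq_square power3_eq_cube)
          moreover have "48*x^3+64*x^2+32*x+8 \<ge> 0" using x0 by simp
          ultimately show ?thesis by linarith
        qed
        ultimately show ?thesis by (metis mult_left_mono zero_le_power2 zero_le_numeral mult_nonneg_nonneg)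
      qed
      also have "\<dots> = 8 * (2*x+1) * ((x+1) * b)^2" using r by simp
      also have "\<dots> = 8 * real c * b^2 * (x+1)^2" using ch x_def by (simp add: power2_eq_square algebra_simps)
      finally have "(4::real)^c * (x+1)^2 \<le> 8 * real c * b^2 * (x+1)^2" .
      hence "(4::real)^c \<le> 8 * real c * b^2" using x0 by (simp add: mult_le_cancel_right_pos)
      thus ?thesis unfolding b_def using ch by simp
    qed
  qed
qed

lemma binom_geo:
  fixes c k :: nat
  assumes hk: "c div 2 \<le> k" and kc: "k \<le> c" and k0: "k > 0"
  shows "\<forall>d. c div 2 + d \<le> k \<longrightarrow> real (c choose (c div 2 + d)) \<ge> real (c choose (c div 2)) * (real (c - k) / real k)^d"
proof
  fix d show "c div 2 + d \<le> k \<longrightarrow> real (c choose (c div 2 + d)) \<ge> real (c choose (c div 2)) * (real (c - k) / real k)^d"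
  proof (induction d)
    case 0 then show ?case by simp
  next
    case (Suc d)
    show ?case
    proof
      assume le: "c div 2 + Suc d \<le> k"
      define j where "j = c div 2 + d"
      have jk: "j + 1 \<le> k" using le j_def by simp
      have IH: "real (c choose j) \<ge> real (c choose (c div 2)) * (real (c - k) / real k)^d"
        using Suc.IH le j_def by simp
      have st: "real (Suc j) * real (c choose Suc j) = real (c - j) * real (c choose j)"
        using real_eq_mult[OF binom_step[of j c]] .
      have x0: "real (c - k) / real k \<ge> 0" by simp
      have ratio: "real (c - j) / real (Suc j) \<ge> real (c - k) / real k"
      proof -
        have "real (c - k) * real (Suc j) \<le> real (c - j) * real k"
        proof -
          have e1: "real (c - k) = real c - real k" using kc by simp
          have e2: "real (c - j) = real c - real j" using jk kc by simp
          have "real c * (real k - real j - 1) \<ge> 0" using jk by simp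
          hence "(real c - real k) * (real j + 1) \<le> (real c - real j) * real k"
            by (simp add: algebra_simps)
          thus ?thesis using e1 e2 by (simp add: add.commute)
        qed
        thus ?thesis using k0 by (simp add: field_simps)
      qed
      have "real (c choose Suc j) = real (c - j) / real (Suc j) * real (c choose j)"
        using st by (simp add: field_simps)
      also have "\<dots> \<ge> real (c - k) / real k * (real (c choose (c div 2)) * (real (c - k) / real k)^d)"
        using ratio IH x0 by (intro mult_mono) auto
      finally show "real (c choose (c div 2 + Suc d)) \<ge> real (c choose (c div 2)) * (real (c - k) / real k)^Suc d"
        using j_def by (simp add: algebra_simps)
    qed
  qed
qed

lemma near_center:
  fixes c k :: nat
  assumes c4: "c \<ge> 4" and kc: "k \<le> c" and D0: "real c \<le> real (2*k)"
    and Dle: "real (2*k) - real c \<le> sqrt (real c) / 2"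
  shows "real (c choose k) \<ge> real (c choose (c div 2)) / 2"
proof -
  define h where "h = c div 2"
  define D where "D = real (2*k) - real c"
  have hk: "h \<le> k" using D0 unfolding h_def by simp
  have k0: "k > 0" using D0 c4 by simp
  define d where "d = k - h"
  define x where "x = real (c - k) / real k"
  have kd: "h + d = k" using hk d_def by simp
  have geo0: "real (c choose (c div 2 + d)) \<ge> real (c choose (c div 2)) * x^d"
    using binom_geo[OF hk[unfolded h_def] kc k0] kd unfolding h_def x_def by auto
  have geo: "real (c choose k) \<ge> real (c choose h) * x^d"
    using geo0 kd unfolding h_def by simp
  have x0: "x \<ge> 0" unfolding x_def by simp
  have bern: "x^d \<ge> 1 + real d * (x - 1)"
    using Bernoulli_inequality[of "x - 1" d] x0 by simp
  have D0': "D \<ge> 0" using D0 D_def by simp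
  have ck: "real c \<le> 2 * real k" using D0 by simp
  have omx: "1 - x = D / real k"
    unfolding x_def D_def using kc k0 by (simp add: field_simps of_nat_diff)
  have dle: "2 * real d \<le> D + 1"
  proof -
    have "c \<le> 2*h + 1" unfolding h_def by simp
    hence "real c \<le> 2 * real h + 1" by linarith
    thus ?thesis unfolding d_def D_def using hk by (simp add: of_nat_diff)
  qed
  have sc: "sqrt (real c) \<ge> 2"
    using c4 real_sqrt_le_mono[of 4 "real c"] by simp
  have sqc: "sqrt (real c) * sqrt (real c) = real c" by simp
  have Dc: "D \<le> real c / 4"
  proof -
    have "D \<le> sqrt (real c) / 2" using Dle D_def by simp
    also have "\<dots> \<le> real c / 4"
    proof -
      have "2 * sqrt (real c) \<le> sqrt (real c) * sqrt (real c)" using sc by (intro mult_right_mono) auto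
      thus ?thesis using sqc by simp
    qed
    finally show ?thesis .
  qed
  have D2: "D * D \<le> real c / 4"
  proof -
    have "D \<le> sqrt (real c) / 2" using Dle D_def by simp
    hence "D * D \<le> (sqrt (real c) / 2) * (sqrt (real c) / 2)" using D0' by (intro mult_mono) auto
    thus ?thesis using sqc by simp
  qed
  have key: "real d * (1 - x) \<le> 1/2"
  proof -
    have "real d * (1 - x) = real d * D / real k" using omx by simp
    also have "\<dots> \<le> ((D + 1) / 2) * D / (real c / 2)"
    proof (rule frac_le)
      show "0 \<le> (D + 1) / 2 * D" using D0' by simp
      show "real d * D \<le> (D + 1) / 2 * D" using dle D0' by (intro mult_right_mono) auto
      show "0 < real c / 2" using c4 by simp
      show "real c / 2 \<le> real k" using ck by simp
    qed
    also have "\<dots> = (D * D + D) / real c" using c4 by (simp add: field_simps)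
    also have "\<dots> \<le> (real c / 2) / real c" using D2 Dc c4 by (intro divide_right_mono) auto
    also have "\<dots> = 1/2" using c4 by simp
    finally show ?thesis .
  qed
  have "x^d \<ge> 1/2" using bern key by (simp add: algebra_simps)
  hence "real (c choose h) * x^d \<ge> real (c choose h) * (1/2)" by (intro mult_left_mono) auto
  thus ?thesis using geo unfolding h_def by linarith
qed

lemma card_window:
  fixes c :: nat and a b w0 :: real
  assumes c4: "c \<ge> 4" and a0: "0 \<le> a" and ab: "a + w0 \<le> b" and b2: "b \<le> 1/2"
    and w: "w0 * sqrt (real c) \<ge> 4" and w0: "w0 > 0"
  shows "real (card {k. k \<le> c \<and> a * sqrt (real c) \<le> real (2*k) - real c \<and> real (2*k) - real c \<le> b * sqrt (real c)})
         \<ge> w0 * sqrt (real c) / 4"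
proof -
  define s where "s = sqrt (real c)"
  have s0: "s \<ge> 0" unfolding s_def by simp
  have sqc: "s * s = real c" unfolding s_def by simp
  have sc: "s \<le> real c"
  proof -
    have "1 \<le> s" unfolding s_def using c4 by simp
    hence "1 * s \<le> s * s" using s0 by (intro mult_right_mono) auto
    thus ?thesis using sqc by simp
  qed
  define lo where "lo = nat \<lceil>(a * s + real c) / 2\<rceil>"
  define hi where "hi = nat \<lfloor>(b * s + real c) / 2\<rfloor>"
  have nn1: "(a * s + real c) / 2 \<ge> 0" using a0 s0 by simp
  have "b \<ge> 0" using a0 ab w0 by linarith
  hence nn2: "(b * s + real c) / 2 \<ge> 0" using s0 by simp
  have lo1: "real lo \<le> (a * s + real c) / 2 + 1"
    unfolding lo_def using nn1 of_int_ceiling_le_add_one[of "(a * s + real c) / 2"] by simp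
  have lo2: "real lo \<ge> (a * s + real c) / 2"
    unfolding lo_def using nn1 le_of_int_ceiling[of "(a * s + real c) / 2"] by simp
  have hi1: "real hi \<ge> (b * s + real c) / 2 - 1"
    unfolding hi_def using nn2 real_of_int_floor_gt_diff_one[of "(b * s + real c) / 2"] by simp
  have hi2: "real hi \<le> (b * s + real c) / 2"
    unfolding hi_def using nn2 of_int_floor_le[of "(b * s + real c) / 2"] by simp
  have sub: "{lo..hi} \<subseteq> {k. k \<le> c \<and> a * s \<le> real (2*k) - real c \<and> real (2*k) - real c \<le> b * s}"
  proof
    fix k assume "k \<in> {lo..hi}"
    hence k1: "real lo \<le> real k" and k2: "real k \<le> real hi" by auto
    have "b * s \<le> real c"
    proof -
      have "b * s \<le> (1/2) * s" using b2 s0 by (intro mult_right_mono) auto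
      thus ?thesis using sc s0 by linarith
    qed
    hence "(b * s + real c) / 2 \<le> real c" by simp
    hence "real k \<le> real c" using k2 hi2 by linarith
    hence "k \<le> c" by simp
    moreover have "a * s \<le> real (2*k) - real c" using k1 lo2 by simp
    moreover have "real (2*k) - real c \<le> b * s" using k2 hi2 by simp
    ultimately show "k \<in> {k. k \<le> c \<and> a * s \<le> real (2*k) - real c \<and> real (2*k) - real c \<le> b * s}" by simp
  qed
  have fin: "finite {k. k \<le> c \<and> a * s \<le> real (2*k) - real c \<and> real (2*k) - real c \<le> b * s}" by simp
  have diff: "real hi + 1 - real lo \<ge> w0 * s / 2 - 1"
  proof -
    have "w0 * s \<le> (b - a) * s" using ab s0 by (intro mult_right_mono) auto
    hence "w0 * s \<le> b * s - a * s" by (simp add: algebra_simps)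
    thus ?thesis using lo1 hi1 by (simp add: field_simps)
  qed
  have ws: "w0 * s / 2 - 1 \<ge> w0 * s / 4" using w s_def by simp
  hence "real hi + 1 - real lo \<ge> 1" using diff w s_def by linarith
  hence lohi: "lo \<le> hi + 1" by linarith
  have "real (card {lo..hi}) = real hi + 1 - real lo" using lohi by (simp add: of_nat_diff)
  hence "real (card {lo..hi}) \<ge> w0 * s / 4" using diff ws by linarith
  moreover have "card {lo..hi} \<le> card {k. k \<le> c \<and> a * s \<le> real (2*k) - real c \<and> real (2*k) - real c \<le> b * s}"
    using card_mono[OF fin sub] .
  ultimately show ?thesis unfolding s_def by linarith
qed

lemma window_sum:
  fixes c :: nat and a b w0 :: real
  assumes c4: "c \<ge> 4" and a0: "0 \<le> a" and ab: "a + w0 \<le> b" and b2: "b \<le> 1/2"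
    and w: "w0 * sqrt (real c) \<ge> 4" and w0: "w0 > 0"
  shows "real (\<Sum>k\<in>{k. k \<le> c \<and> a * sqrt (real c) \<le> real (2*k) - real c \<and> real (2*k) - real c \<le> b * sqrt (real c)}. c choose k)
         \<ge> w0 / 32 * 2^c"
proof -
  define K where "K = {k. k \<le> c \<and> a * sqrt (real c) \<le> real (2*k) - real c \<and> real (2*k) - real c \<le> b * sqrt (real c)}"
  define C where "C = real (c choose (c div 2))"
  define s where "s = sqrt (real c)"
  have s0: "s \<ge> 0" unfolding s_def by simp
  have C0: "C \<ge> 0" unfolding C_def by simp
  have each: "\<forall>k\<in>K. real (c choose k) \<ge> C / 2"
  proof
    fix k assume "k \<in> K"
    hence kc: "k \<le> c" and l: "a * s \<le> real (2*k) - real c" and u: "real (2*k) - real c \<le> b * s"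
      unfolding K_def s_def by auto
    have "0 \<le> a * s" using a0 s0 by simp
    hence D0: "real c \<le> real (2*k)" using l by linarith
    have "b * s \<le> (1/2) * s" using mult_right_mono[OF b2 s0] .
    hence "b * s \<le> s / 2" by simp
    hence "real (2*k) - real c \<le> sqrt (real c) / 2" using u s_def by linarith
    thus "real (c choose k) \<ge> C / 2" unfolding C_def using near_center[OF c4 kc D0] by simp
  qed
  have "real (\<Sum>k\<in>K. c choose k) = (\<Sum>k\<in>K. real (c choose k))" by simp
  also have "\<dots> \<ge> real (card K) * (C / 2)"
    using sum_bounded_below[of K "C/2" "\<lambda>k. real (c choose k)"] each by simp
  finally have S1: "real (\<Sum>k\<in>K. c choose k) \<ge> real (card K) * (C / 2)" .
  have ck: "real (card K) \<ge> w0 * s / 4" unfolding K_def s_def using card_window[OF c4 a0 ab b2 w w0] .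
  have C0': "C / 2 \<ge> 0" using C0 by simp
  have S2: "real (card K) * (C / 2) \<ge> (w0 * s / 4) * (C / 2)" using mult_right_mono[OF ck C0'] .
  have cb: "(2::real)^c \<le> 4 * s * C"
  proof -
    have "(4::real)^c \<le> 8 * real c * C^2" using cb_bound[of c] c4 C_def by simp
    also have "\<dots> \<le> 16 * real c * C^2" by (simp add: mult_right_mono)
    also have "\<dots> = (4 * s * C)^2" unfolding s_def by (simp add: power2_eq_square algebra_simps)
    finally have "(4::real)^c \<le> (4 * s * C)^2" .
    moreover have "((2::real)^c)^2 = 4^c" by (simp add: power2_eq_square power_mult_distrib[symmetric])
    ultimately have "((2::real)^c)^2 \<le> (4 * s * C)^2" by simp
    moreover have "4 * s * C \<ge> 0" using s0 C0 by simp
    ultimately show ?thesis by (rule power2_le_imp_le)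
  qed
  have w32: "w0 / 32 \<ge> 0" using w0 by simp
  have "w0 / 32 * 2^c \<le> w0 / 32 * (4 * s * C)" using mult_left_mono[OF cb w32] .
  also have "\<dots> = (w0 * s / 4) * (C / 2)" by (simp add: algebra_simps)
  finally show ?thesis using S1 S2 unfolding K_def by linarith
qed

lemma card_subsets_sum:
  assumes fS: "finite S"
  shows "card {U. U \<subseteq> S \<and> Q (card U)} = (\<Sum>k\<in>{k. k \<le> card S \<and> Q k}. card S choose k)"
proof -
  have eq: "{U. U \<subseteq> S \<and> Q (card U)} = (\<Union>k\<in>{k. k \<le> card S \<and> Q k}. {U. U \<subseteq> S \<and> card U = k})"
    using fS card_mono by fastforce
  have "card (\<Union>k\<in>{k. k \<le> card S \<and> Q k}. {U. U \<subseteq> S \<and> card U = k})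
        = (\<Sum>k\<in>{k. k \<le> card S \<and> Q k}. card {U. U \<subseteq> S \<and> card U = k})"
  proof (rule card_UN_disjoint)
    show "finite {k. k \<le> card S \<and> Q k}" by simp
    show "\<forall>i\<in>{k. k \<le> card S \<and> Q k}. finite {U. U \<subseteq> S \<and> card U = i}" using fS by simp
    show "\<forall>i\<in>{k. k \<le> card S \<and> Q k}. \<forall>j\<in>{k. k \<le> card S \<and> Q k}. i \<noteq> j \<longrightarrow>
          {U. U \<subseteq> S \<and> card U = i} \<inter> {U. U \<subseteq> S \<and> card U = j} = {}" by blast
  qed
  also have "\<dots> = (\<Sum>k\<in>{k. k \<le> card S \<and> Q k}. card S choose k)"
    using n_subsets[OF fS] by simp
  finally show ?thesis using eq by simp
qed

lemma card_subsets_compl: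
  assumes fS: "finite S"
  shows "card {U. U \<subseteq> S \<and> Q (card S - card U)} = card {U. U \<subseteq> S \<and> Q (card U)}"
proof -
  have "bij_betw (\<lambda>U. S - U) {U. U \<subseteq> S \<and> Q (card S - card U)} {U. U \<subseteq> S \<and> Q (card U)}"
  proof (rule bij_betw_byWitness[where f' = "\<lambda>U. S - U"])
    show "\<forall>a\<in>{U. U \<subseteq> S \<and> Q (card S - card U)}. S - (S - a) = a" by auto
    show "\<forall>a\<in>{U. U \<subseteq> S \<and> Q (card U)}. S - (S - a) = a" by auto
    show "(\<lambda>U. S - U) ` {U. U \<subseteq> S \<and> Q (card S - card U)} \<subseteq> {U. U \<subseteq> S \<and> Q (card U)}"
      using fS by (auto simp: card_Diff_subset finite_subset)
    show "(\<lambda>U. S - U) ` {U. U \<subseteq> S \<and> Q (card U)} \<subseteq> {U. U \<subseteq> S \<and> Q (card S - card U)}"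
    proof
      fix W assume "W \<in> (\<lambda>U. S - U) ` {U. U \<subseteq> S \<and> Q (card U)}"
      then obtain U where U: "U \<subseteq> S" "Q (card U)" "W = S - U" by auto
      have "card S - card W = card U"
        using U fS by (simp add: card_Diff_subset finite_subset card_mono)
      thus "W \<in> {U. U \<subseteq> S \<and> Q (card S - card U)}" using U by auto
    qed
  qed
  thus ?thesis by (rule bij_betw_same_card)
qed

lemma win_pos:
  fixes \<rho> y :: real and r n :: nat and S :: "'a set"
  assumes fS: "finite S" and c4: "card S \<ge> 4" and rho: "\<rho> > 0" and big: "\<rho> * sqrt (real (card S)) \<ge> 4"
    and cn: "card S \<le> n" and nr: "real n \<le> real r * real (card S)"
    and y0: "y \<ge> 0" and yb: "(y + \<rho>) * sqrt (real r) \<le> 1/2"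
  shows "real (card {U. U \<subseteq> S \<and> (card U \<le> card S \<and> y * sqrt (real n) \<le> real (2 * card U) - real (card S)
            \<and> real (2 * card U) - real (card S) \<le> (y + \<rho>) * sqrt (real n))}) \<ge> \<rho> / 32 * 2 ^ card S"
proof -
  define c where "c = card S"
  define t where "t = sqrt (real n / real c)"
  have c0: "real c > 0" using c4 c_def by simp
  have tc: "t * sqrt (real c) = sqrt (real n)" unfolding t_def using c0 by (simp add: real_sqrt_mult[symmetric])
  have t1: "t \<ge> 1" unfolding t_def using cn c0 c_def by simp
  have tr: "t \<le> sqrt (real r)"
  proof -
    have "real n / real c \<le> real r" using nr c0 c_def by (simp add: field_simps)
    thus ?thesis unfolding t_def by simp
  qed
  define a where "a = y * t"
  define b where "b = (y + \<rho>) * t"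
  have a0: "0 \<le> a" unfolding a_def using y0 t1 by simp
  have ab: "a + \<rho> \<le> b"
  proof -
    have "\<rho> * 1 \<le> \<rho> * t" using mult_left_mono[OF t1] rho by simp
    thus ?thesis unfolding a_def b_def by (simp add: algebra_simps)
  qed
  have b2: "b \<le> 1/2"
  proof -
    have "y + \<rho> \<ge> 0" using y0 rho by simp
    hence "b \<le> (y + \<rho>) * sqrt (real r)" unfolding b_def using mult_left_mono[OF tr] by simp
    thus ?thesis using yb by simp
  qed
  have as: "a * sqrt (real c) = y * sqrt (real n)" unfolding a_def using tc by (simp add: mult.assoc)
  have bs: "b * sqrt (real c) = (y + \<rho>) * sqrt (real n)" unfolding b_def using tc by (simp add: mult.assoc)
  have ws: "\<rho> / 32 * 2 ^ c \<le> real (\<Sum>k\<in>{k. k \<le> c \<and> a * sqrt (real c) \<le> real (2*k) - real c \<and> real (2*k) - real c \<le> b * sqrt (real c)}. c choose k)"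
    using window_sum[OF c4[folded c_def] a0 ab b2 big[folded c_def] rho] .
  have "card {U. U \<subseteq> S \<and> (card U \<le> c \<and> y * sqrt (real n) \<le> real (2 * card U) - real c
            \<and> real (2 * card U) - real c \<le> (y + \<rho>) * sqrt (real n))}
        = (\<Sum>k\<in>{k. k \<le> c \<and> (k \<le> c \<and> y * sqrt (real n) \<le> real (2*k) - real c \<and> real (2*k) - real c \<le> (y + \<rho>) * sqrt (real n))}. c choose k)"
    using card_subsets_sum[OF fS, of "\<lambda>k. k \<le> c \<and> y * sqrt (real n) \<le> real (2*k) - real c \<and> real (2*k) - real c \<le> (y + \<rho>) * sqrt (real n)"]
    unfolding c_def by simp
  also have "\<dots> = (\<Sum>k\<in>{k. k \<le> c \<and> a * sqrt (real c) \<le> real (2*k) - real c \<and> real (2*k) - real c \<le> b * sqrt (real c)}. c choose k)"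
    unfolding as bs by (simp only: conj_absorb conj_assoc[symmetric])
  finally show ?thesis using ws unfolding c_def by simp
qed

lemma oneD:
  fixes \<rho> y :: real and r n :: nat and S :: "'a set"
  assumes fS: "finite S" and c4: "card S \<ge> 4" and rho: "\<rho> > 0" and big: "\<rho> * sqrt (real (card S)) \<ge> 4"
    and cn: "card S \<le> n" and nr: "real n \<le> real r * real (card S)"
    and yb: "(\<bar>y\<bar> + \<rho>) * sqrt (real r) \<le> 1/2"
  shows "real (card {U. U \<subseteq> S \<and> \<bar>real (2 * card U) - real (card S) - sqrt (real n) * y\<bar> \<le> \<rho> * sqrt (real n)})
         \<ge> \<rho> / 32 * 2 ^ card S"
proof -
  define T where "T = {U. U \<subseteq> S \<and> \<bar>real (2 * card U) - real (card S) - sqrt (real n) * y\<bar> \<le> \<rho> * sqrt (real n)}"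
  have fT: "finite T" unfolding T_def using fS by simp
  show ?thesis
  proof (cases "y \<ge> 0")
    case True
    have yb': "(y + \<rho>) * sqrt (real r) \<le> 1/2" using yb True by simp
    have sub: "{U. U \<subseteq> S \<and> (card U \<le> card S \<and> y * sqrt (real n) \<le> real (2 * card U) - real (card S)
            \<and> real (2 * card U) - real (card S) \<le> (y + \<rho>) * sqrt (real n))} \<subseteq> T"
      unfolding T_def by (auto simp: algebra_simps)
    show ?thesis using win_pos[OF fS c4 rho big cn nr True yb'] card_mono[OF fT sub] unfolding T_def[symmetric]
      by linarith
  next
    case False
    define y' where "y' = - y"
    have y0: "y' \<ge> 0" using False y'_def by simp
    have yb': "(y' + \<rho>) * sqrt (real r) \<le> 1/2" using yb False y'_def by simp
    define P where "P = (\<lambda>k. k \<le> card S \<and> y' * sqrt (real n) \<le> real (2 * k) - real (card S)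
            \<and> real (2 * k) - real (card S) \<le> (y' + \<rho>) * sqrt (real n))"
    have w: "real (card {U. U \<subseteq> S \<and> P (card U)}) \<ge> \<rho> / 32 * 2 ^ card S"
      using win_pos[OF fS c4 rho big cn nr y0 yb'] unfolding P_def by simp
    have sub: "{U. U \<subseteq> S \<and> P (card S - card U)} \<subseteq> T"
    proof
      fix U assume "U \<in> {U. U \<subseteq> S \<and> P (card S - card U)}"
      hence U: "U \<subseteq> S" "P (card S - card U)" by auto
      have cu: "card U \<le> card S" using U fS by (simp add: card_mono)
      have e: "real (2 * (card S - card U)) - real (card S) = real (card S) - real (2 * card U)"
        using cu by (simp add: of_nat_diff)
      have "y' * sqrt (real n) \<le> real (card S) - real (2 * card U)"
           "real (card S) - real (2 * card U) \<le> (y' + \<rho>) * sqrt (real n)"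
        using U(2) unfolding P_def e by auto
      hence "\<bar>real (2 * card U) - real (card S) - sqrt (real n) * y\<bar> \<le> \<rho> * sqrt (real n)"
        unfolding y'_def by (auto simp: algebra_simps)
      thus "U \<in> T" unfolding T_def using U by simp
    qed
    have "card {U. U \<subseteq> S \<and> P (card S - card U)} = card {U. U \<subseteq> S \<and> P (card U)}"
      by (rule card_subsets_compl[OF fS])
    thus ?thesis using w card_mono[OF fT sub] unfolding T_def[symmetric] by linarith
  qed
qed

lemma card_pow_partition:
  fixes I :: "'i set" and Sf :: "'i \<Rightarrow> 'a set" and Q :: "'i \<Rightarrow> 'a set \<Rightarrow> bool"
  assumes "finite I" and "\<forall>i\<in>I. finite (Sf i)" and "\<forall>i\<in>I. \<forall>i'\<in>I. i \<noteq> i' \<longrightarrow> Sf i \<inter> Sf i' = {}"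
  shows "card {T. T \<subseteq> (\<Union>i\<in>I. Sf i) \<and> (\<forall>i\<in>I. Q i (T \<inter> Sf i))} = (\<Prod>i\<in>I. card {U. U \<subseteq> Sf i \<and> Q i U})"
  using assms
proof (induction I rule: finite_induct)
  case empty
  have "{T. T \<subseteq> (\<Union>i\<in>{}. Sf i) \<and> (\<forall>i\<in>{}. Q i (T \<inter> Sf i))} = {{}}" by auto
  thus ?case by simp
next
  case (insert j I)
  define A where "A = Sf j"
  define B where "B = (\<Union>i\<in>I. Sf i)"
  have dis: "\<forall>i\<in>I. \<forall>i'\<in>I. i \<noteq> i' \<longrightarrow> Sf i \<inter> Sf i' = {}" using insert.prems(2) by auto
  have IH: "card {T. T \<subseteq> B \<and> (\<forall>i\<in>I. Q i (T \<inter> Sf i))} = (\<Prod>i\<in>I. card {U. U \<subseteq> Sf i \<and> Q i U})"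
    using insert.IH insert.prems dis unfolding B_def by simp
  have AiB: "\<forall>i\<in>I. A \<inter> Sf i = {}"
    using insert.prems(2) insert.hyps(2) unfolding A_def by auto
  hence AB: "A \<inter> B = {}" unfolding B_def by auto
  define L where "L = {T. T \<subseteq> (\<Union>i\<in>insert j I. Sf i) \<and> (\<forall>i\<in>insert j I. Q i (T \<inter> Sf i))}"
  define R1 where "R1 = {U. U \<subseteq> A \<and> Q j U}"
  define R2 where "R2 = {T. T \<subseteq> B \<and> (\<forall>i\<in>I. Q i (T \<inter> Sf i))}"
  have bij: "bij_betw (\<lambda>T. (T \<inter> A, T \<inter> B)) L (R1 \<times> R2)"
  proof (rule bij_betw_byWitness[where f' = "\<lambda>(U, W). U \<union> W"])
    show "\<forall>T\<in>L. (case (T \<inter> A, T \<inter> B) of (U, W) \<Rightarrow> U \<union> W) = T"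
      unfolding L_def A_def B_def by auto
    show "\<forall>p\<in>R1 \<times> R2. ((case p of (U, W) \<Rightarrow> U \<union> W) \<inter> A, (case p of (U, W) \<Rightarrow> U \<union> W) \<inter> B) = p"
      unfolding R1_def R2_def using AB by auto
    show "(\<lambda>T. (T \<inter> A, T \<inter> B)) ` L \<subseteq> R1 \<times> R2"
    proof
      fix p assume "p \<in> (\<lambda>T. (T \<inter> A, T \<inter> B)) ` L"
      then obtain T where T: "T \<in> L" "p = (T \<inter> A, T \<inter> B)" by auto
      have "\<forall>i\<in>I. T \<inter> B \<inter> Sf i = T \<inter> Sf i" unfolding B_def by auto
      thus "p \<in> R1 \<times> R2" using T unfolding L_def R1_def R2_def A_def by auto
    qed
    show "(\<lambda>(U, W). U \<union> W) ` (R1 \<times> R2) \<subseteq> L"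
    proof
      fix T assume "T \<in> (\<lambda>(U, W). U \<union> W) ` (R1 \<times> R2)"
      then obtain U W where UW: "U \<in> R1" "W \<in> R2" "T = U \<union> W" by auto
      have "\<forall>i\<in>I. T \<inter> Sf i = W \<inter> Sf i" using UW AiB unfolding R1_def by auto
      moreover have "T \<inter> A = U" using UW AB unfolding R1_def R2_def by auto
      ultimately show "T \<in> L" using UW unfolding L_def R1_def R2_def A_def B_def by auto
    qed
  qed
  have "card L = card R1 * card R2" using bij_betw_same_card[OF bij] card_cartesian_product by simp
  thus ?case unfolding L_def[symmetric] using IH insert.hyps unfolding R1_def R2_def A_def by simp
qed

lemma sum_pow_count:
  fixes Lp :: "'a set" and V :: "'v set" and z :: real
  assumes fL: "finite Lp" and pL: "p \<in> Lp" and fV: "finite V"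
  shows "(\<Sum>g\<in>PiE V (\<lambda>_. Lp). z ^ card {i\<in>V. g i = p}) = (z + real (card Lp - 1)) ^ card V"
proof -
  have e1: "\<And>g. z ^ card {i\<in>V. g i = p} = (\<Prod>i\<in>V. (if g i = p then z else 1))"
  proof -
    fix g
    have "(\<Prod>i\<in>V. (if g i = p then z else 1)) = (\<Prod>i\<in>{i\<in>V. g i = p}. z)"
      using prod.inter_filter[OF fV, of "\<lambda>_. z" "\<lambda>i. g i = p"] by simp
    thus "z ^ card {i\<in>V. g i = p} = (\<Prod>i\<in>V. (if g i = p then z else 1))" by simp
  qed
  have "(\<Sum>g\<in>PiE V (\<lambda>_. Lp). z ^ card {i\<in>V. g i = p}) = (\<Sum>g\<in>PiE V (\<lambda>_. Lp). \<Prod>i\<in>V. (\<lambda>i a. if a = p then z else 1) i (g i))"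
    using e1 by simp
  also have "\<dots> = (\<Prod>i\<in>V. \<Sum>a\<in>Lp. (if a = p then z else 1))"
    using prod_sum_PiE[OF fV, of "\<lambda>_. Lp" "\<lambda>i a. if a = p then z else 1"] fL by simp
  also have "(\<Sum>a\<in>Lp. (if a = p then z else (1::real))) = z + real (card Lp - 1)"
  proof -
    have "(\<Sum>a\<in>Lp. (if a = p then z else (1::real))) = z + (\<Sum>a\<in>Lp - {p}. (if a = p then z else 1))"
      using sum.remove[OF fL pL, of "\<lambda>a. if a = p then z else (1::real)"] by simp
    also have "(\<Sum>a\<in>Lp - {p}. (if a = p then z else (1::real))) = (\<Sum>a\<in>Lp - {p}. 1)"
      by (rule sum.cong) auto
    also have "\<dots> = real (card (Lp - {p}))" by simp
    finally show ?thesis using pL fL by simp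
  qed
  finally show ?thesis by simp
qed

lemma bad_bound:
  fixes Lp :: "'a set" and V :: "'v set" and t :: real and r :: nat
  assumes fL: "finite Lp" and pL: "p \<in> Lp" and fV: "finite V" and t1: "t \<ge> 1"
  shows "real (card {g\<in>PiE V (\<lambda>_. Lp). r * card {i\<in>V. g i = p} < card V})
         \<le> (t * ((1/t)^r + real (card Lp - 1))) ^ card V"
proof -
  define Bad where "Bad = {g\<in>PiE V (\<lambda>_. Lp). r * card {i\<in>V. g i = p} < card V}"
  define z where "z = (1/t)^r"
  have fP: "finite (PiE V (\<lambda>_. Lp))" using fV fL by (simp add: finite_PiE)
  have z0: "z \<ge> 0" unfolding z_def using t1 by simp
  have one: "\<And>g. g \<in> Bad \<Longrightarrow> 1 \<le> t ^ card V * z ^ card {i\<in>V. g i = p}"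
  proof -
    fix g assume "g \<in> Bad"
    hence lt: "r * card {i\<in>V. g i = p} \<le> card V" unfolding Bad_def by simp
    define m where "m = r * card {i\<in>V. g i = p}"
    have e1: "t ^ card V = t ^ m * t ^ (card V - m)" using lt m_def by (simp add: power_add[symmetric])
    have e2: "t ^ (card V - m) \<ge> 1" using t1 by simp
    have e3: "z ^ card {i\<in>V. g i = p} = 1 / t ^ m" unfolding z_def m_def by (simp add: power_mult power_divide)
    have e4: "t ^ m > 0" using t1 by simp
    have "t ^ card V * z ^ card {i\<in>V. g i = p} = t ^ (card V - m) * (t ^ m * (1 / t ^ m))"
      unfolding e1 e3 by (simp add: algebra_simps)
    also have "\<dots> = t ^ (card V - m)" using e4 t1 by simp
    finally show "1 \<le> t ^ card V * z ^ card {i\<in>V. g i = p}" using e2 by simp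
  qed
  have "real (card Bad) = (\<Sum>g\<in>Bad. 1)" by simp
  also have "\<dots> \<le> (\<Sum>g\<in>Bad. t ^ card V * z ^ card {i\<in>V. g i = p})"
    using one by (intro sum_mono) auto
  also have "\<dots> \<le> (\<Sum>g\<in>PiE V (\<lambda>_. Lp). t ^ card V * z ^ card {i\<in>V. g i = p})"
    using fP z0 t1 by (intro sum_mono2) (auto simp: Bad_def)
  also have "\<dots> = t ^ card V * (z + real (card Lp - 1)) ^ card V"
    using sum_pow_count[OF fL pL fV, of z] by (simp add: sum_distrib_left[symmetric])
  also have "\<dots> = (t * (z + real (card Lp - 1))) ^ card V" by (simp add: power_mult_distrib)
  finally show ?thesis unfolding Bad_def z_def .
qed

lemma good_count:
  fixes Lp :: "'a set"
  assumes fL: "finite Lp" and ne: "Lp \<noteq> {}"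
  shows "\<exists>n0. \<forall>V::'v set. finite V \<and> card V \<ge> n0 \<longrightarrow>
     real (card {g\<in>PiE V (\<lambda>_. Lp). \<forall>p\<in>Lp. card V \<le> 12 * card Lp * card {i\<in>V. g i = p}})
       \<ge> real (card Lp) ^ card V / 2"
proof -
  define N where "N = card Lp"
  have N1: "N \<ge> 1" unfolding N_def using fL ne by (simp add: Suc_le_eq card_gt_0_iff)
  define t where "t = 1 + 1 / (4 * real N)"
  define r where "r = 12 * N"
  have t1: "t \<ge> 1" unfolding t_def by simp
  have tr: "t ^ r \<ge> 4"
  proof -
    have "1 + real r * (1 / (4 * real N)) \<le> t ^ r"
      unfolding t_def by (rule Bernoulli_inequality) (smt (verit) divide_nonneg_nonneg of_nat_0_le_iff)
    moreover have "real r * (1 / (4 * real N)) = 3" unfolding r_def using N1 by simp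
    ultimately show ?thesis by simp
  qed
  have z: "(1/t)^r \<le> 1/4"
  proof -
    have "(1/t)^r = 1 / t^r" by (simp add: power_divide)
    also have "\<dots> \<le> 1/4" using tr by (simp add: divide_simps)
    finally show ?thesis .
  qed
  define q where "q = real N - 1/2"
  have q0: "q > 0" unfolding q_def using N1 by simp
  have qb: "t * ((1/t)^r + real (N - 1)) \<le> q"
  proof -
    have "t * ((1/t)^r + real (N - 1)) \<le> t * (1/4 + real (N - 1))"
      using z t1 by (simp add: mult_left_mono)
    also have "\<dots> = (1 + 1 / (4 * real N)) * (real N - 3/4)" unfolding t_def using N1 by (simp add: of_nat_diff)
    also have "\<dots> = real N - 3/4 + (real N - 3/4) / (4 * real N)" by (simp add: distrib_right)
    also have "(real N - 3/4) / (4 * real N) \<le> 1/4" using N1 by (simp add: divide_simps)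
    finally show ?thesis unfolding q_def by simp
  qed
  have lim: "(\<lambda>n. (q / real N) ^ n) \<longlonglongrightarrow> 0"
    by (rule LIMSEQ_power_zero) (use q0 N1 in \<open>simp add: q_def\<close>)
  have "\<forall>\<^sub>F n in sequentially. (q / real N) ^ n < 1 / (2 * real N)"
    using order_tendstoD(2)[OF lim] N1 by simp
  then obtain n0 where n0: "\<And>n. n \<ge> n0 \<Longrightarrow> (q / real N) ^ n < 1 / (2 * real N)"
    unfolding eventually_sequentially by blast
  show ?thesis
  proof (intro exI allI impI)
    fix V :: "'v set" assume V: "finite V \<and> n0 \<le> card V"
    hence fV: "finite V" by simp
    define n where "n = card V"
    define P where "P = PiE V (\<lambda>_. Lp)"
    define Good where "Good = {g\<in>P. \<forall>p\<in>Lp. card V \<le> 12 * card Lp * card {i\<in>V. g i = p}}"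
    define Bad where "Bad = (\<lambda>p. {g\<in>P. r * card {i\<in>V. g i = p} < card V})"
    have fP: "finite P" unfolding P_def using fV fL by (simp add: finite_PiE)
    have cP: "card P = N ^ n" unfolding P_def N_def n_def using fV by (simp add: card_PiE)
    have split: "P \<subseteq> Good \<union> (\<Union>p\<in>Lp. Bad p)"
      unfolding Good_def Bad_def r_def N_def by (auto simp: not_le)
    have cb: "\<And>p. p \<in> Lp \<Longrightarrow> real (card (Bad p)) \<le> q ^ n"
    proof -
      fix p assume p: "p \<in> Lp"
      have "real (card (Bad p)) \<le> (t * ((1/t)^r + real (card Lp - 1))) ^ card V"
        unfolding Bad_def P_def using bad_bound[OF fL p fV t1, of r] .
      also have "\<dots> \<le> q ^ n"
      proof -
        have nn: "0 \<le> t * ((1/t)^r + real (N - 1))" using t1 by simp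
        show ?thesis using power_mono[OF qb nn, of n] unfolding n_def N_def by simp
      qed
      finally show "real (card (Bad p)) \<le> q ^ n" .
    qed
    have fG: "finite Good" unfolding Good_def using fP by simp
    have fB: "finite (\<Union>p\<in>Lp. Bad p)" unfolding Bad_def using fP fL by simp
    have c1: "card P \<le> card (Good \<union> (\<Union>p\<in>Lp. Bad p))" by (rule card_mono[OF _ split]) (use fG fB in simp)
    have c2: "card (Good \<union> (\<Union>p\<in>Lp. Bad p)) \<le> card Good + card (\<Union>p\<in>Lp. Bad p)" by (rule card_Un_le)
    have c3: "card (\<Union>p\<in>Lp. Bad p) \<le> (\<Sum>p\<in>Lp. card (Bad p))" by (rule card_UN_le[OF fL])
    have "card P \<le> card Good + (\<Sum>p\<in>Lp. card (Bad p))" using c1 c2 c3 by linarith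
    hence "real (card P) \<le> real (card Good + (\<Sum>p\<in>Lp. card (Bad p)))" by (rule of_nat_mono)
    hence "real (card P) \<le> real (card Good) + (\<Sum>p\<in>Lp. real (card (Bad p)))" by simp
    also have "(\<Sum>p\<in>Lp. real (card (Bad p))) \<le> (\<Sum>p\<in>Lp. q ^ n)" by (rule sum_mono) (rule cb)
    also have "\<dots> = real N * q ^ n" unfolding N_def by simp
    finally have A: "real (N ^ n) \<le> real (card Good) + real N * q ^ n" using cP by simp
    have "real N * q ^ n = real N * real N ^ n * (q / real N) ^ n"
      using N1 by (simp add: power_divide)
    also have "\<dots> \<le> real N * real N ^ n * (1 / (2 * real N))"
    proof -
      have "(q / real N) ^ n \<le> 1 / (2 * real N)" using n0[of n] V n_def by simp
      moreover have "real N * real N ^ n \<ge> 0" by simp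
      ultimately show ?thesis by (rule mult_left_mono)
    qed
    also have "\<dots> = real N ^ n / 2" using N1 by simp
    finally have "real N * q ^ n \<le> real N ^ n / 2" .
    hence "real (card Good) \<ge> real N ^ n / 2" using A by simp
    thus "real (card {g\<in>PiE V (\<lambda>_. Lp). \<forall>p\<in>Lp. card V \<le> 12 * card Lp * card {i\<in>V. g i = p}})
       \<ge> real (card Lp) ^ card V / 2" unfolding Good_def P_def N_def n_def .
  qed
qed

definition indf :: "('a \<Rightarrow> 'a) \<Rightarrow> 'a \<Rightarrow> 'a \<Rightarrow> int" where
  "indf rv s p = (if s = p then 1 else if s = rv p then -1 else 0)"

definition Phi :: "'v set \<Rightarrow> ('a \<Rightarrow> 'a) \<Rightarrow> ('v \<Rightarrow> 'a) \<Rightarrow> 'v set \<Rightarrow> 'v \<Rightarrow> 'a" where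
  "Phi V rv g T = (\<lambda>i\<in>V. if i \<in> T then g i else rv (g i))"

lemma W_Phi:
  assumes fV: "finite V" and g: "g \<in> PiE V (\<lambda>_. Lp)" and TV: "T \<subseteq> V" and p: "p \<in> Lp"
    and inj: "inj_on rv Lp" and disj: "rv ` Lp \<inter> Lp = {}"
  shows "(\<Sum>i\<in>V. indf rv (Phi V rv g T i) p) = 2 * int (card (T \<inter> {i\<in>V. g i = p})) - int (card {i\<in>V. g i = p})"
proof -
  define S where "S = {i\<in>V. g i = p}"
  have e: "\<And>i. i \<in> V \<Longrightarrow> indf rv (Phi V rv g T i) p = of_bool (i \<in> S \<inter> T) - of_bool (i \<in> S - T)"
  proof -
    fix i assume i: "i \<in> V"
    have gi: "g i \<in> Lp" using g i by auto
    have rvp: "rv p \<noteq> p" using disj p by auto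
    show "indf rv (Phi V rv g T i) p = of_bool (i \<in> S \<inter> T) - of_bool (i \<in> S - T)"
    proof (cases "g i = p")
      case True
      then show ?thesis using i rvp unfolding indf_def Phi_def S_def by auto
    next
      case False
      have a: "rv (g i) \<noteq> p" using disj gi p by auto
      have b: "rv (g i) \<noteq> rv p" using inj gi p False by (auto dest: inj_onD)
      have c: "g i \<noteq> rv p" using disj gi p by auto
      show ?thesis using i False a b c unfolding indf_def Phi_def S_def by auto
    qed
  qed
  have "(\<Sum>i\<in>V. indf rv (Phi V rv g T i) p) = (\<Sum>i\<in>V. (of_bool (i \<in> S \<inter> T) - of_bool (i \<in> S - T) :: int))"
    using e by (rule sum.cong[OF refl])
  also have "\<dots> = int (card (V \<inter> {i. i \<in> S \<inter> T})) - int (card (V \<inter> {i. i \<in> S - T}))"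
    using fV by (simp add: sum_subtractf)
  also have "V \<inter> {i. i \<in> S \<inter> T} = T \<inter> S" unfolding S_def by auto
  also have "V \<inter> {i. i \<in> S - T} = S - T" unfolding S_def by auto
  also have "card S = card (S \<inter> T) + card (S - T)" using card_Int_Diff[of S T] fV unfolding S_def by simp
  hence "int (card (S - T)) = int (card S) - int (card (T \<inter> S))" by (simp add: Int_commute)
  finally show ?thesis unfolding S_def by simp
qed

lemma Phi_in:
  assumes g: "g \<in> PiE V (\<lambda>_. Lp)"
  shows "Phi V rv g T \<in> PiE V (\<lambda>_. Lp \<union> rv ` Lp)"
  using g unfolding Phi_def by (auto simp: PiE_iff)

lemma Phi_inj:
  assumes inj: "inj_on rv Lp" and disj: "rv ` Lp \<inter> Lp = {}"
  shows "inj_on (\<lambda>(g, T). Phi V rv g T) (PiE V (\<lambda>_. Lp) \<times> Pow V)"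
proof (rule inj_onI)
  fix x y assume x: "x \<in> PiE V (\<lambda>_. Lp) \<times> Pow V" and y: "y \<in> PiE V (\<lambda>_. Lp) \<times> Pow V"
    and eq: "(\<lambda>(g, T). Phi V rv g T) x = (\<lambda>(g, T). Phi V rv g T) y"
  obtain g T where gT: "x = (g, T)" by (cases x)
  obtain g' T' where gT': "y = (g', T')" by (cases y)
  have g: "g \<in> PiE V (\<lambda>_. Lp)" "T \<subseteq> V" using x gT by auto
  have g': "g' \<in> PiE V (\<lambda>_. Lp)" "T' \<subseteq> V" using y gT' by auto
  have eq': "Phi V rv g T = Phi V rv g' T'" using eq gT gT' by simp
  have pt: "\<And>i. i \<in> V \<Longrightarrow> (if i \<in> T then g i else rv (g i)) = (if i \<in> T' then g' i else rv (g' i))"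
  proof -
    fix i assume i: "i \<in> V"
    show "(if i \<in> T then g i else rv (g i)) = (if i \<in> T' then g' i else rv (g' i))"
      using fun_cong[OF eq', of i] i unfolding Phi_def by simp
  qed
  have both: "\<And>i. i \<in> V \<Longrightarrow> g i = g' i \<and> (i \<in> T \<longleftrightarrow> i \<in> T')"
  proof -
    fix i assume i: "i \<in> V"
    have gi: "g i \<in> Lp" "g' i \<in> Lp" using g g' i by auto
    have nr: "\<And>a b. a \<in> Lp \<Longrightarrow> b \<in> Lp \<Longrightarrow> a \<noteq> rv b" using disj by auto
    have p: "(if i \<in> T then g i else rv (g i)) = (if i \<in> T' then g' i else rv (g' i))" using pt[OF i] .
    show "g i = g' i \<and> (i \<in> T \<longleftrightarrow> i \<in> T')"
    proof (cases "i \<in> T")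
      case True
      show ?thesis
      proof (cases "i \<in> T'")
        case True2: True
        then show ?thesis using p True by simp
      next
        case False
        then have "g i = rv (g' i)" using p True by simp
        then show ?thesis using nr[OF gi(1) gi(2)] by simp
      qed
    next
      case False
      show ?thesis
      proof (cases "i \<in> T'")
        case True2: True
        then have "rv (g i) = g' i" using p False by simp
        then show ?thesis using nr[OF gi(2) gi(1)] by simp
      next
        case False2: False
        then have "rv (g i) = rv (g' i)" using p False by simp
        then have "g i = g' i" using inj_onD[OF inj _ gi(1) gi(2)] by simp
        then show ?thesis using False False2 by simp
      qed
    qed
  qed
  have "g = g'"
  proof
    fix i show "g i = g' i"
      using both g(1) g'(1) by (cases "i \<in> V") (auto simp: PiE_def extensional_def)
  qed
  moreover have "T = T'" using both g(2) g'(2) by auto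
  ultimately show "x = y" using gT gT' by simp
qed

lemma c0_exists:
  fixes \<rho> :: real assumes rho: "\<rho> > 0"
  shows "\<exists>c0. \<forall>c. c \<ge> c0 \<longrightarrow> c \<ge> 4 \<and> \<rho> * sqrt (real c) \<ge> 4"
proof -
  define c0 where "c0 = 4 + nat \<lceil>16 / \<rho>^2\<rceil>"
  show ?thesis
  proof (intro exI allI impI conjI)
    fix c assume c: "c \<ge> c0"
    thus "c \<ge> 4" unfolding c0_def by simp
    have "real c \<ge> 16 / \<rho>^2" using c unfolding c0_def by linarith
    hence "sqrt (real c) \<ge> sqrt (16 / \<rho>^2)" by (rule real_sqrt_le_mono)
    moreover have "sqrt (16 / \<rho>^2) = 4 / \<rho>" using rho by (simp add: real_sqrt_divide)
    ultimately have "sqrt (real c) \<ge> 4 / \<rho>" by simp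
    hence "\<rho> * sqrt (real c) \<ge> \<rho> * (4 / \<rho>)" using mult_left_mono[of "4/\<rho>" "sqrt (real c)" \<rho>] rho by simp
    thus "\<rho> * sqrt (real c) \<ge> 4" using rho by simp
  qed
qed

lemma Tset_bound:
  fixes Lp :: "'a set" and V :: "'v set" and g :: "'v \<Rightarrow> 'a" and y :: "'a \<Rightarrow> real"
  assumes fL: "finite Lp" and fV: "finite V" and g: "g \<in> PiE V (\<lambda>_. Lp)"
    and rho: "\<rho> > 0"
    and cbig: "\<forall>p\<in>Lp. card {i\<in>V. g i = p} \<ge> 4 \<and> \<rho> * sqrt (real (card {i\<in>V. g i = p})) \<ge> 4"
    and good: "\<forall>p\<in>Lp. card V \<le> r * card {i\<in>V. g i = p}"
    and yb: "\<forall>p\<in>Lp. (\<bar>y p\<bar> + \<rho>) * sqrt (real r) \<le> 1/2"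
  shows "real (card {T. T \<subseteq> V \<and> (\<forall>p\<in>Lp. \<bar>real (2 * card (T \<inter> {i\<in>V. g i = p})) - real (card {i\<in>V. g i = p})
             - sqrt (real (card V)) * y p\<bar> \<le> \<rho> * sqrt (real (card V)))})
         \<ge> (\<rho> / 32) ^ card Lp * 2 ^ card V"
proof -
  define S where "S = (\<lambda>p. {i\<in>V. g i = p})"
  define n where "n = card V"
  define Q where "Q = (\<lambda>p (U::'v set). \<bar>real (2 * card U) - real (card (S p)) - sqrt (real n) * y p\<bar> \<le> \<rho> * sqrt (real n))"
  have VU: "V = (\<Union>p\<in>Lp. S p)" unfolding S_def using g by (auto simp: PiE_iff)
  have fS: "\<forall>p\<in>Lp. finite (S p)" unfolding S_def using fV by simp
  have dS: "\<forall>p\<in>Lp. \<forall>p'\<in>Lp. p \<noteq> p' \<longrightarrow> S p \<inter> S p' = {}" unfolding S_def by auto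
  have "card {T. T \<subseteq> (\<Union>p\<in>Lp. S p) \<and> (\<forall>p\<in>Lp. Q p (T \<inter> S p))} = (\<Prod>p\<in>Lp. card {U. U \<subseteq> S p \<and> Q p U})"
    by (rule card_pow_partition[OF fL fS dS])
  hence eq: "real (card {T. T \<subseteq> V \<and> (\<forall>p\<in>Lp. Q p (T \<inter> S p))}) = (\<Prod>p\<in>Lp. real (card {U. U \<subseteq> S p \<and> Q p U}))"
    unfolding VU[symmetric] by simp
  have each: "\<forall>p\<in>Lp. real (card {U. U \<subseteq> S p \<and> Q p U}) \<ge> \<rho> / 32 * 2 ^ card (S p)"
  proof
    fix p assume p: "p \<in> Lp"
    have fSp: "finite (S p)" using fS p by simp
    have c4: "card (S p) \<ge> 4" and big: "\<rho> * sqrt (real (card (S p))) \<ge> 4" using cbig p unfolding S_def by auto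
    have cn: "card (S p) \<le> n" unfolding n_def S_def using fV by (simp add: card_mono)
    have nr: "real n \<le> real r * real (card (S p))" using good p unfolding n_def S_def
      by (metis of_nat_le_iff of_nat_mult)
    have ybp: "(\<bar>y p\<bar> + \<rho>) * sqrt (real r) \<le> 1/2" using yb p by simp
    show "real (card {U. U \<subseteq> S p \<and> Q p U}) \<ge> \<rho> / 32 * 2 ^ card (S p)"
      using oneD[OF fSp c4 rho big cn nr ybp] unfolding Q_def by simp
  qed
  have "(\<Prod>p\<in>Lp. real (card {U. U \<subseteq> S p \<and> Q p U})) \<ge> (\<Prod>p\<in>Lp. \<rho> / 32 * 2 ^ card (S p))"
    by (rule prod_mono) (use each rho in auto)
  moreover have "(\<Prod>p\<in>Lp. \<rho> / 32 * (2::real) ^ card (S p)) = (\<rho> / 32) ^ card Lp * 2 ^ (\<Sum>p\<in>Lp. card (S p))"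
  proof -
    have "(\<Prod>p\<in>Lp. \<rho> / 32 * (2::real) ^ card (S p)) = (\<Prod>p\<in>Lp. \<rho> / 32) * (\<Prod>p\<in>Lp. (2::real) ^ card (S p))"
      by (rule prod.distrib)
    also have "(\<Prod>p\<in>Lp. \<rho> / 32) = (\<rho> / 32) ^ card Lp" by simp
    also have "(\<Prod>p\<in>Lp. (2::real) ^ card (S p)) = 2 ^ (\<Sum>p\<in>Lp. card (S p))" by (simp add: power_sum)
    finally show ?thesis .
  qed
  moreover have "(\<Sum>p\<in>Lp. card (S p)) = n"
  proof -
    have "card (\<Union>p\<in>Lp. S p) = (\<Sum>p\<in>Lp. card (S p))" by (rule card_UN_disjoint[OF fL fS dS])
    thus ?thesis unfolding n_def using VU by simp
  qed
  ultimately have "real (card {T. T \<subseteq> V \<and> (\<forall>p\<in>Lp. Q p (T \<inter> S p))}) \<ge> (\<rho> / 32) ^ card Lp * 2 ^ n"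
    using eq by simp
  thus ?thesis unfolding Q_def S_def n_def by simp
qed

lemma box_lemma:
  fixes Lp :: "'a set" and rv :: "'a \<Rightarrow> 'a" and y :: "'a \<Rightarrow> real" and \<rho> :: real
  assumes fL: "finite Lp" and ne: "Lp \<noteq> {}" and inj: "inj_on rv Lp" and disj: "rv ` Lp \<inter> Lp = {}"
    and rho: "\<rho> > 0"
    and yb: "\<forall>p\<in>Lp. (\<bar>y p\<bar> + \<rho>) * sqrt (real (12 * card Lp)) \<le> 1/2"
  shows "\<exists>\<delta>>0. \<exists>n0. \<forall>V::'v set. finite V \<and> card V \<ge> n0 \<longrightarrow>
     real (card {f \<in> PiE V (\<lambda>_. Lp \<union> rv ` Lp). \<forall>p\<in>Lp.
        \<bar>real_of_int (\<Sum>i\<in>V. indf rv (f i) p) - sqrt (real (card V)) * y p\<bar> \<le> \<rho> * sqrt (real (card V))})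
     \<ge> \<delta> * real (card (Lp \<union> rv ` Lp)) ^ card V"
proof -
  define N where "N = card Lp"
  define r where "r = 12 * N"
  have N1: "N \<ge> 1" unfolding N_def using fL ne by (simp add: Suc_le_eq card_gt_0_iff)
  obtain n1 where n1: "\<forall>V::'v set. finite V \<and> card V \<ge> n1 \<longrightarrow>
     real (card {g\<in>PiE V (\<lambda>_. Lp). \<forall>p\<in>Lp. card V \<le> 12 * card Lp * card {i\<in>V. g i = p}})
       \<ge> real (card Lp) ^ card V / 2"
    using good_count[OF fL ne] by blast
  obtain c0 where c0: "\<forall>c. c \<ge> c0 \<longrightarrow> c \<ge> 4 \<and> \<rho> * sqrt (real c) \<ge> 4" using c0_exists[OF rho] by blast
  define \<delta> where "\<delta> = (\<rho> / 32) ^ N / 2"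
  have d0: "\<delta> > 0" unfolding \<delta>_def using rho by simp
  have cL: "card (Lp \<union> rv ` Lp) = 2 * N"
  proof -
    have "card (Lp \<union> rv ` Lp) = card Lp + card (rv ` Lp)"
      by (rule card_Un_disjoint) (use fL disj in auto)
    also have "card (rv ` Lp) = card Lp" by (rule card_image[OF inj])
    finally show ?thesis unfolding N_def by simp
  qed
  show ?thesis
  proof (intro exI conjI allI impI)
    show "\<delta> > 0" by (rule d0)
    fix V :: "'v set" assume V: "finite V \<and> max n1 (r * c0) \<le> card V"
    have fV: "finite V" using V by simp
    define n where "n = card V"
    define G where "G = {g\<in>PiE V (\<lambda>_. Lp). \<forall>p\<in>Lp. card V \<le> 12 * card Lp * card {i\<in>V. g i = p}}"
    define Tset where "Tset = (\<lambda>g. {T. T \<subseteq> V \<and> (\<forall>p\<in>Lp. \<bar>real (2 * card (T \<inter> {i\<in>V. g i = p})) - real (card {i\<in>V. g i = p})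
             - sqrt (real (card V)) * y p\<bar> \<le> \<rho> * sqrt (real (card V)))})"
    define F where "F = {f \<in> PiE V (\<lambda>_. Lp \<union> rv ` Lp). \<forall>p\<in>Lp.
        \<bar>real_of_int (\<Sum>i\<in>V. indf rv (f i) p) - sqrt (real (card V)) * y p\<bar> \<le> \<rho> * sqrt (real (card V))}"
    have fG: "finite G" unfolding G_def using fV fL by (simp add: finite_PiE)
    have cG: "real (card G) \<ge> real N ^ n / 2" using n1 V unfolding G_def N_def n_def by simp
    have cT: "\<And>g. g \<in> G \<Longrightarrow> real (card (Tset g)) \<ge> (\<rho> / 32) ^ N * 2 ^ n"
    proof -
      fix g assume g: "g \<in> G"
      have gP: "g \<in> PiE V (\<lambda>_. Lp)" using g unfolding G_def by simp
      have good: "\<forall>p\<in>Lp. card V \<le> r * card {i\<in>V. g i = p}" using g unfolding G_def r_def N_def by simp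
      have cbig: "\<forall>p\<in>Lp. card {i\<in>V. g i = p} \<ge> 4 \<and> \<rho> * sqrt (real (card {i\<in>V. g i = p})) \<ge> 4"
      proof
        fix p assume p: "p \<in> Lp"
        have a1: "r * c0 \<le> card V" using V by simp
        have a2: "card V \<le> r * card {i\<in>V. g i = p}" using good p by simp
        have "r * c0 \<le> r * card {i\<in>V. g i = p}" using a1 a2 by (rule le_trans)
        hence "c0 \<le> card {i\<in>V. g i = p}" unfolding r_def using N1 by simp
        thus "card {i\<in>V. g i = p} \<ge> 4 \<and> \<rho> * sqrt (real (card {i\<in>V. g i = p})) \<ge> 4" using c0 by blast
      qed
      have ybr: "\<forall>p\<in>Lp. (\<bar>y p\<bar> + \<rho>) * sqrt (real r) \<le> 1/2" using yb unfolding r_def N_def .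
      show "real (card (Tset g)) \<ge> (\<rho> / 32) ^ N * 2 ^ n"
        using Tset_bound[OF fL fV gP rho cbig good ybr] unfolding Tset_def N_def n_def .
    qed
    have fTs: "\<And>g. finite (Tset g)" unfolding Tset_def using fV by simp
    have sub: "(\<lambda>(g, T). Phi V rv g T) ` (SIGMA g:G. Tset g) \<subseteq> F"
    proof
      fix f assume "f \<in> (\<lambda>(g, T). Phi V rv g T) ` (SIGMA g:G. Tset g)"
      then obtain g T where gT: "g \<in> G" "T \<in> Tset g" "f = Phi V rv g T" by auto
      have gP: "g \<in> PiE V (\<lambda>_. Lp)" using gT unfolding G_def by simp
      have TV: "T \<subseteq> V" using gT unfolding Tset_def by simp
      have "f \<in> PiE V (\<lambda>_. Lp \<union> rv ` Lp)" using Phi_in[OF gP] gT by simp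
      moreover have "\<forall>p\<in>Lp. \<bar>real_of_int (\<Sum>i\<in>V. indf rv (f i) p) - sqrt (real (card V)) * y p\<bar> \<le> \<rho> * sqrt (real (card V))"
      proof
        fix p assume p: "p \<in> Lp"
        have W: "(\<Sum>i\<in>V. indf rv (f i) p) = 2 * int (card (T \<inter> {i\<in>V. g i = p})) - int (card {i\<in>V. g i = p})"
          using W_Phi[OF fV gP TV p inj disj] gT by simp
        have "real_of_int (\<Sum>i\<in>V. indf rv (f i) p) = real (2 * card (T \<inter> {i\<in>V. g i = p})) - real (card {i\<in>V. g i = p})"
          unfolding W by simp
        thus "\<bar>real_of_int (\<Sum>i\<in>V. indf rv (f i) p) - sqrt (real (card V)) * y p\<bar> \<le> \<rho> * sqrt (real (card V))"
          using gT(2) p unfolding Tset_def by simp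
      qed
      ultimately show "f \<in> F" unfolding F_def by simp
    qed
    have injS: "inj_on (\<lambda>(g, T). Phi V rv g T) (SIGMA g:G. Tset g)"
    proof (rule inj_on_subset[OF Phi_inj[OF inj disj]])
      show "(SIGMA g:G. Tset g) \<subseteq> PiE V (\<lambda>_. Lp) \<times> Pow V" unfolding G_def Tset_def by auto
    qed
    have fF: "finite F" unfolding F_def using fV fL by (simp add: finite_PiE)
    have "card (SIGMA g:G. Tset g) = card ((\<lambda>(g, T). Phi V rv g T) ` (SIGMA g:G. Tset g))"
      using card_image[OF injS] by simp
    also have "\<dots> \<le> card F" by (rule card_mono[OF fF sub])
    finally have c1: "card (SIGMA g:G. Tset g) \<le> card F" .
    have "card (SIGMA g:G. Tset g) = (\<Sum>g\<in>G. card (Tset g))" by (rule card_SigmaI[OF fG]) (use fTs in simp)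
    hence "real (card (SIGMA g:G. Tset g)) = (\<Sum>g\<in>G. real (card (Tset g)))" by simp
    also have "\<dots> \<ge> (\<Sum>g\<in>G. (\<rho> / 32) ^ N * 2 ^ n)" by (rule sum_mono) (rule cT)
    finally have c2: "real (card (SIGMA g:G. Tset g)) \<ge> real (card G) * ((\<rho> / 32) ^ N * 2 ^ n)" by simp
    have c3: "real (card G) * ((\<rho> / 32) ^ N * 2 ^ n) \<ge> real N ^ n / 2 * ((\<rho> / 32) ^ N * 2 ^ n)"
      using mult_right_mono[OF cG, of "(\<rho> / 32) ^ N * 2 ^ n"] rho by simp
    have "real N ^ n / 2 * ((\<rho> / 32) ^ N * 2 ^ n) = \<delta> * real (card (Lp \<union> rv ` Lp)) ^ n"
      unfolding \<delta>_def cL by (simp add: power_mult_distrib)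
    hence "real (card F) \<ge> \<delta> * real (card (Lp \<union> rv ` Lp)) ^ n" using c1 c2 c3
      by (smt (verit) of_nat_le_iff)
    thus "real (card {f \<in> PiE V (\<lambda>_. Lp \<union> rv ` Lp). \<forall>p\<in>Lp.
        \<bar>real_of_int (\<Sum>i\<in>V. indf rv (f i) p) - sqrt (real (card V)) * y p\<bar> \<le> \<rho> * sqrt (real (card V))})
     \<ge> \<delta> * real (card (Lp \<union> rv ` Lp)) ^ card V" unfolding F_def n_def .
  qed
qed

definition mv :: "('x \<times> 'x) set \<Rightarrow> 'x \<times> 'x \<Rightarrow> int" where
  "mv s e = of_bool (e \<in> s) - of_bool (prod.swap e \<in> s)"

lemma mv_converse: "mv (s\<inverse>) e = - mv s e"
  unfolding mv_def by (cases e) auto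

lemma slo_intro:
  assumes sub: "r \<subseteq> X \<times> X" and irr: "\<forall>x\<in>X. (x, x) \<notin> r"
    and tr: "\<forall>x\<in>X. \<forall>y\<in>X. \<forall>z\<in>X. (x, y) \<in> r \<and> (y, z) \<in> r \<longrightarrow> (x, z) \<in> r"
    and tot: "\<forall>x\<in>X. \<forall>y\<in>X. x \<noteq> y \<longrightarrow> (x, y) \<in> r \<or> (y, x) \<in> r"
  shows "strict_linear_order_on X r"
proof -
  have "\<forall>x\<in>X. \<forall>y\<in>X. \<forall>z\<in>X. (x, y) \<in> r \<longrightarrow> (x, z) \<in> r \<or> (z, y) \<in> r"
  proof (intro ballI impI)
    fix x y z assume xyz: "x \<in> X" "y \<in> X" "z \<in> X" and xy: "(x, y) \<in> r"
    show "(x, z) \<in> r \<or> (z, y) \<in> r"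
    proof (cases "z = x")
      case True then show ?thesis using xy by simp
    next
      case False
      then have "(x, z) \<in> r \<or> (z, x) \<in> r" using tot xyz(1) xyz(3) by auto
      then show ?thesis
      proof
        assume "(z, x) \<in> r"
        hence "(z, y) \<in> r" using tr[rule_format, of z x y] xyz xy by simp
        thus ?thesis by simp
      qed simp
    qed
  qed
  hence "strict_weak_order_on X r" unfolding strict_weak_order_on_def using sub irr tr
    by (intro conjI) assumption+
  thus ?thesis unfolding strict_linear_order_on_def using tot by (intro conjI) assumption+
qed

lemma swo_D:
  assumes "strict_weak_order_on X r"
  shows "r \<subseteq> X \<times> X" "\<forall>x\<in>X. (x, x) \<notin> r"
    "\<forall>x\<in>X. \<forall>y\<in>X. \<forall>z\<in>X. (x, y) \<in> r \<and> (y, z) \<in> r \<longrightarrow> (x, z) \<in> r"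
    "\<forall>x\<in>X. \<forall>y\<in>X. \<forall>z\<in>X. (x, y) \<in> r \<longrightarrow> (x, z) \<in> r \<or> (z, y) \<in> r"
  using assms unfolding strict_weak_order_on_def by blast+

lemma slo_D:
  assumes "strict_linear_order_on X r"
  shows "strict_weak_order_on X r" "\<forall>x\<in>X. \<forall>y\<in>X. x \<noteq> y \<longrightarrow> (x, y) \<in> r \<or> (y, x) \<in> r"
  using assms unfolding strict_linear_order_on_def by blast+
lemma slo_converse:
  assumes s: "strict_linear_order_on X r" shows "strict_linear_order_on X (r\<inverse>)"
proof -
  note w = slo_D(1)[OF s]
  note sub = swo_D(1)[OF w] and irr = swo_D(2)[OF w] and tr = swo_D(3)[OF w]
  have tot: "\<forall>x\<in>X. \<forall>y\<in>X. x \<noteq> y \<longrightarrow> (x, y) \<in> r \<or> (y, x) \<in> r" using slo_D(2)[OF s] .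
  show ?thesis
  proof (rule slo_intro)
    show "r\<inverse> \<subseteq> X \<times> X" using sub by auto
    show "\<forall>x\<in>X. (x, x) \<notin> r\<inverse>" using irr by auto
    show "\<forall>x\<in>X. \<forall>y\<in>X. \<forall>z\<in>X. (x, y) \<in> r\<inverse> \<and> (y, z) \<in> r\<inverse> \<longrightarrow> (x, z) \<in> r\<inverse>"
    proof (intro ballI impI)
      fix x y z assume "x \<in> X" "y \<in> X" "z \<in> X" "(x, y) \<in> r\<inverse> \<and> (y, z) \<in> r\<inverse>"
      thus "(x, z) \<in> r\<inverse>" using tr[rule_format, of z y x] by simp
    qed
    show "\<forall>x\<in>X. \<forall>y\<in>X. x \<noteq> y \<longrightarrow> (x, y) \<in> r\<inverse> \<or> (y, x) \<in> r\<inverse>"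
    proof (intro ballI impI)
      fix x y assume "x \<in> X" "y \<in> X" "x \<noteq> y"
      thus "(x, y) \<in> r\<inverse> \<or> (y, x) \<in> r\<inverse>" using tot[rule_format, of x y] by auto
    qed
  qed
qed

lemma slo_exists:
  assumes "finite X" shows "\<exists>r. strict_linear_order_on X r"
proof -
  obtain h where h: "bij_betw h X {0..<card X}" using ex_bij_betw_finite_nat[OF assms] by blast
  define r where "r = {(a, b). a \<in> X \<and> b \<in> X \<and> h a < h b}"
  have "strict_linear_order_on X r"
  proof (rule slo_intro)
    show "r \<subseteq> X \<times> X" unfolding r_def by auto
    show "\<forall>x\<in>X. (x, x) \<notin> r" unfolding r_def by auto
    show "\<forall>x\<in>X. \<forall>y\<in>X. \<forall>z\<in>X. (x, y) \<in> r \<and> (y, z) \<in> r \<longrightarrow> (x, z) \<in> r" unfolding r_def by auto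
    show "\<forall>x\<in>X. \<forall>y\<in>X. x \<noteq> y \<longrightarrow> (x, y) \<in> r \<or> (y, x) \<in> r"
    proof (intro ballI impI)
      fix x y assume xy: "x \<in> X" "y \<in> X" "x \<noteq> y"
      have "h x \<noteq> h y" using bij_betw_imp_inj_on[OF h] xy by (metis inj_onD)
      hence "h x < h y \<or> h y < h x" by linarith
      thus "(x, y) \<in> r \<or> (y, x) \<in> r" unfolding r_def using xy by auto
    qed
  qed
  thus ?thesis by blast
qed

definition linz :: "'x set \<Rightarrow> ('x \<times> 'x) set \<Rightarrow> ('x \<times> 'x) set \<Rightarrow> ('x \<times> 'x) set" where
  "linz X s w = {(a, b). a \<in> X \<and> b \<in> X \<and> ((a, b) \<in> w \<or> ((a, b) \<notin> w \<and> (b, a) \<notin> w \<and> (a, b) \<in> s))}"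

lemma linz_slo:
  assumes w: "strict_weak_order_on X w" and s: "strict_linear_order_on X s"
  shows "strict_linear_order_on X (linz X s w)"
proof (rule slo_intro)
  note wsub = swo_D(1)[OF w] and wirr = swo_D(2)[OF w] and wtr = swo_D(3)[OF w] and wnt = swo_D(4)[OF w]
  note sirr = swo_D(2)[OF slo_D(1)[OF s]] and str = swo_D(3)[OF slo_D(1)[OF s]] and stot = slo_D(2)[OF s]
  show "linz X s w \<subseteq> X \<times> X" unfolding linz_def by auto
  show "\<forall>x\<in>X. (x, x) \<notin> linz X s w" unfolding linz_def using wirr sirr by auto
  show "\<forall>x\<in>X. \<forall>y\<in>X. x \<noteq> y \<longrightarrow> (x, y) \<in> linz X s w \<or> (y, x) \<in> linz X s w"
  proof (intro ballI impI)
    fix x y assume xy: "x \<in> X" "y \<in> X" "x \<noteq> y"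
    have "(x, y) \<in> s \<or> (y, x) \<in> s" using stot[rule_format, OF xy] .
    thus "(x, y) \<in> linz X s w \<or> (y, x) \<in> linz X s w" unfolding linz_def using xy by auto
  qed
  show "\<forall>x\<in>X. \<forall>y\<in>X. \<forall>z\<in>X. (x, y) \<in> linz X s w \<and> (y, z) \<in> linz X s w \<longrightarrow> (x, z) \<in> linz X s w"
  proof (intro ballI impI)
    fix a b c assume abc: "a \<in> X" "b \<in> X" "c \<in> X" and h: "(a, b) \<in> linz X s w \<and> (b, c) \<in> linz X s w"
    have ab: "(a, b) \<in> w \<or> ((a, b) \<notin> w \<and> (b, a) \<notin> w \<and> (a, b) \<in> s)" using h unfolding linz_def by auto
    have bc: "(b, c) \<in> w \<or> ((b, c) \<notin> w \<and> (c, b) \<notin> w \<and> (b, c) \<in> s)" using h unfolding linz_def by auto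
    have "(a, c) \<in> w \<or> ((a, c) \<notin> w \<and> (c, a) \<notin> w \<and> (a, c) \<in> s)"
    proof -
      { assume "(a, b) \<in> w" "(b, c) \<in> w"
        hence ?thesis using wtr[rule_format, of a b c] abc by blast }
      moreover
      { assume 1: "(a, b) \<in> w" and 2: "(b, c) \<notin> w \<and> (c, b) \<notin> w \<and> (b, c) \<in> s"
        have "(a, c) \<in> w \<or> (c, b) \<in> w" using wnt[rule_format, of a b c] abc 1 by blast
        hence ?thesis using 2 by blast }
      moreover
      { assume 1: "(a, b) \<notin> w \<and> (b, a) \<notin> w \<and> (a, b) \<in> s" and 2: "(b, c) \<in> w"
        have "(b, a) \<in> w \<or> (a, c) \<in> w" using wnt[rule_format, of b c a] abc 2 by blast
        hence ?thesis using 1 by blast }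
      moreover
      { assume 1: "(a, b) \<notin> w \<and> (b, a) \<notin> w \<and> (a, b) \<in> s" and 2: "(b, c) \<notin> w \<and> (c, b) \<notin> w \<and> (b, c) \<in> s"
        have acs: "(a, c) \<in> s" using str[rule_format, of a b c] abc 1 2 by blast
        have "(c, a) \<notin> w"
        proof
          assume "(c, a) \<in> w"
          hence "(c, b) \<in> w \<or> (b, a) \<in> w" using wnt[rule_format, of c a b] abc by blast
          thus False using 1 2 by blast
        qed
        hence ?thesis using acs by blast }
      ultimately show ?thesis using ab bc by blast
    qed
    thus "(a, c) \<in> linz X s w" unfolding linz_def using abc by auto
  qed
qed

lemma linz_mv:
  assumes w: "strict_weak_order_on X w" and s: "strict_linear_order_on X s"
  shows "mv (linz X s w) e + mv (linz X (s\<inverse>) w) e = 2 * mv w e"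
proof -
  obtain a b where e: "e = (a, b)" by (cases e)
  note wsub = swo_D(1)[OF w] and wirr = swo_D(2)[OF w] and wtr = swo_D(3)[OF w]
  have asym: "(a, b) \<in> w \<Longrightarrow> (b, a) \<notin> w"
  proof
    assume ab: "(a, b) \<in> w" and ba: "(b, a) \<in> w"
    have X: "a \<in> X" "b \<in> X" using ab wsub by auto
    have "(a, a) \<in> w" using wtr[rule_format, of a b a] X ab ba by simp
    thus False using wirr X by auto
  qed
  show ?thesis
  proof (cases "(a, b) \<in> w")
    case True
    then show ?thesis using asym[OF True] wsub unfolding e mv_def linz_def by auto
  next
    case False
    show ?thesis
    proof (cases "(b, a) \<in> w")
      case True
      then show ?thesis using False wsub unfolding e mv_def linz_def by auto
    next
      case False2: False
      show ?thesis
      proof (cases "a \<in> X \<and> b \<in> X")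
        case True
        then show ?thesis using False False2 unfolding e mv_def linz_def by auto
      next
        case False3: False
        then show ?thesis using False False2 unfolding e mv_def linz_def by auto
      qed
    qed
  qed
qed

lemma margin_sum:
  assumes fV: "finite (voters P)"
  shows "margin P a b = (\<Sum>i\<in>voters P. mv (ballot P i) (a, b))"
proof -
  have s1: "int (support P a b) = (\<Sum>i\<in>voters P. of_bool ((a, b) \<in> ballot P i))"
    unfolding support_def using fV by (simp add: Int_def conj_commute)
  have s2: "int (support P b a) = (\<Sum>i\<in>voters P. of_bool ((b, a) \<in> ballot P i))"
    unfolding support_def using fV by (simp add: Int_def conj_commute)
  show ?thesis unfolding margin_def mv_def using s1 s2 by (simp add: sum_subtractf)
qed

lemma margin_antisym: "margin P b a = - margin P a b"
  unfolding margin_def by simp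

lemma margin_refl: "margin P a a = 0"
  unfolding margin_def by simp

lemma lot_D:
  assumes T: "linearly_edge_ordered_tournament (ordinal_margin_graph P)"
  shows "\<forall>x\<in>alts P. \<forall>y\<in>alts P. x \<noteq> y \<longrightarrow> (x, y) \<in> margin_edges P \<or> (y, x) \<in> margin_edges P"
    and "\<forall>e\<in>margin_edges P. \<forall>e'\<in>margin_edges P. e \<noteq> e' \<longrightarrow> margin P (fst e) (snd e) \<noteq> margin P (fst e') (snd e')"
proof -
  have T': "(\<forall>x\<in>alts P. \<forall>y\<in>alts P. x \<noteq> y \<longrightarrow> (x, y) \<in> margin_edges P \<or> (y, x) \<in> margin_edges P)
      \<and> strict_linear_order_on (margin_edges P) {((a, b), (c, d)). (a, b) \<in> margin_edges P \<and> (c, d) \<in> margin_edges P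
                         \<and> margin P a b > margin P c d}"
    using T unfolding linearly_edge_ordered_tournament_def ordinal_margin_graph_def Let_def by simp
  thus "\<forall>x\<in>alts P. \<forall>y\<in>alts P. x \<noteq> y \<longrightarrow> (x, y) \<in> margin_edges P \<or> (y, x) \<in> margin_edges P" by simp
  have lin: "\<forall>e\<in>margin_edges P. \<forall>e'\<in>margin_edges P. e \<noteq> e' \<longrightarrow>
      (e, e') \<in> {((a, b), (c, d)). (a, b) \<in> margin_edges P \<and> (c, d) \<in> margin_edges P \<and> margin P a b > margin P c d}
    \<or> (e', e) \<in> {((a, b), (c, d)). (a, b) \<in> margin_edges P \<and> (c, d) \<in> margin_edges P \<and> margin P a b > margin P c d}"
    using slo_D(2)[OF conjunct2[OF T']] .
  show "\<forall>e\<in>margin_edges P. \<forall>e'\<in>margin_edges P. e \<noteq> e' \<longrightarrow> margin P (fst e) (snd e) \<noteq> margin P (fst e') (snd e')"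
  proof (intro ballI impI)
    fix e e' assume e: "e \<in> margin_edges P" "e' \<in> margin_edges P" "e \<noteq> e'"
    have "(e, e') \<in> {((a, b), (c, d)). (a, b) \<in> margin_edges P \<and> (c, d) \<in> margin_edges P \<and> margin P a b > margin P c d}
    \<or> (e', e) \<in> {((a, b), (c, d)). (a, b) \<in> margin_edges P \<and> (c, d) \<in> margin_edges P \<and> margin P a b > margin P c d}"
      using lin e by blast
    thus "margin P (fst e) (snd e) \<noteq> margin P (fst e') (snd e')" by (cases e; cases e'; auto)
  qed
qed

lemma omg_eq:
  assumes T: "linearly_edge_ordered_tournament (ordinal_margin_graph P)"
    and XQ: "alts Q = alts P"
    and pos: "\<forall>a b. (a, b) \<in> margin_edges P \<longrightarrow> margin Q a b > 0"
    and ordm: "\<forall>a b c d. (a, b) \<in> margin_edges P \<longrightarrow> (c, d) \<in> margin_edges P \<longrightarrow> margin P a b > margin P c d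
              \<longrightarrow> margin Q a b > margin Q c d"
  shows "ordinal_margin_graph Q = ordinal_margin_graph P"
proof -
  note tour = lot_D(1)[OF T] and lin = lot_D(2)[OF T]
  have EE: "margin_edges Q = margin_edges P"
  proof
    show "margin_edges P \<subseteq> margin_edges Q"
      using pos XQ unfolding margin_edges_def by auto
    show "margin_edges Q \<subseteq> margin_edges P"
    proof
      fix e assume eQ: "e \<in> margin_edges Q"
      obtain a b where e: "e = (a, b)" by (cases e)
      have ab: "a \<in> alts P" "b \<in> alts P" "margin Q a b > 0" using eQ XQ unfolding e margin_edges_def by auto
      show "e \<in> margin_edges P"
      proof (rule ccontr)
        assume nE: "e \<notin> margin_edges P"
        have "a \<noteq> b" using ab(3) margin_refl[of Q a] by auto
        hence "(b, a) \<in> margin_edges P" using tour ab nE e by blast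
        hence "margin Q b a > 0" using pos by blast
        thus False using ab(3) margin_antisym[of Q b a] by simp
      qed
    qed
  qed
  have OO: "\<And>a b c d. (a, b) \<in> margin_edges P \<Longrightarrow> (c, d) \<in> margin_edges P \<Longrightarrow>
            (margin Q a b > margin Q c d) = (margin P a b > margin P c d)"
  proof -
    fix a b c d assume ab: "(a, b) \<in> margin_edges P" and cd: "(c, d) \<in> margin_edges P"
    show "(margin Q a b > margin Q c d) = (margin P a b > margin P c d)"
    proof
      assume q: "margin Q a b > margin Q c d"
      show "margin P a b > margin P c d"
      proof (rule ccontr)
        assume "\<not> margin P a b > margin P c d"
        hence le: "margin P a b \<le> margin P c d" by simp
        show False
        proof (cases "(a, b) = (c, d)")
          case True then show False using q by simp
        next
          case False
          hence "margin P a b \<noteq> margin P c d" using lin ab cd by fastforce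
          hence "margin P c d > margin P a b" using le by simp
          hence "margin Q c d > margin Q a b" using ordm ab cd by blast
          thus False using q by simp
        qed
      qed
    next
      assume "margin P a b > margin P c d"
      thus "margin Q a b > margin Q c d" using ordm ab cd by blast
    qed
  qed
  have "{((a, b), (c, d)). (a, b) \<in> margin_edges Q \<and> (c, d) \<in> margin_edges Q \<and> margin Q a b > margin Q c d}
      = {((a, b), (c, d)). (a, b) \<in> margin_edges P \<and> (c, d) \<in> margin_edges P \<and> margin P a b > margin P c d}"
    unfolding EE using OO by blast
  thus ?thesis unfolding ordinal_margin_graph_def using XQ EE by simp
qed

lemma triple_simps [simp]: "voters (V, X, b) = V" "alts (V, X, b) = X" "ballot (V, X, b) = b"
  unfolding voters_def alts_def ballot_def by simp_all

lemma prof_triple: "is_profile (V, X, b) = (finite V \<and> V \<noteq> {} \<and> finite X \<and> X \<noteq> {}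
     \<and> (\<forall>i\<in>V. strict_weak_order_on X (b i)) \<and> (\<forall>i. i \<notin> V \<longrightarrow> b i = {}))"
  unfolding is_profile_def by simp

lemma mv_bound: "\<bar>mv s e\<bar> \<le> 1"
  unfolding mv_def by auto

lemma single_case:
  fixes F :: "('v, 'x) profile \<Rightarrow> 'x set" and P :: "('v, 'x) profile"
  assumes inf: "infinite (UNIV :: 'v set)"
    and omi: "ordinal_margin_invariant F"
    and svr: "single_voter_resolvable F"
    and prof: "is_profile P"
    and T: "linearly_edge_ordered_tournament (ordinal_margin_graph P)"
    and gt: "card (F P) > 1"
  shows False
proof -
  define V where "V = voters P"
  define X where "X = alts P"
  have fV: "finite V" and neV: "V \<noteq> {}" and fX: "finite X" and neX: "X \<noteq> {}"
    and wo: "\<forall>i\<in>V. strict_weak_order_on X (ballot P i)"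
    and out: "\<forall>i. i \<notin> V \<longrightarrow> ballot P i = {}"
    using prof unfolding is_profile_def V_def X_def by auto
  have "infinite (UNIV - V)" using inf fV by (simp add: Diff_infinite_finite)
  then obtain S where fS: "finite S" and cS: "card S = 2 * card V" and SV: "S \<subseteq> UNIV - V"
    using infinite_arbitrarily_large by blast
  have "card (V \<times> {0::nat, 1}) = 2 * card V" using fV by (simp add: card_cartesian_product)
  then obtain \<beta> where bij: "bij_betw \<beta> S (V \<times> {0::nat, 1})"
    using finite_same_card_bij[OF fS] fV cS by (metis finite_SigmaI finite.emptyI finite_insert)
  define h where "h = (\<lambda>i. if i \<in> V then i else fst (\<beta> i))"
  have hV: "\<And>i. i \<in> V \<union> S \<Longrightarrow> h i \<in> V"
  proof -
    fix i assume i: "i \<in> V \<union> S"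
    show "h i \<in> V"
    proof (cases "i \<in> V")
      case True then show ?thesis unfolding h_def by simp
    next
      case False
      hence "i \<in> S" using i by simp
      hence "\<beta> i \<in> V \<times> {0::nat, 1}" using bij_betwE[OF bij] by blast
      thus ?thesis unfolding h_def using False by auto
    qed
  qed
  define b3 where "b3 = (\<lambda>i. if i \<in> V \<union> S then ballot P (h i) else {})"
  define P3 where "P3 = (V \<union> S, X, b3)"
  have prof3: "is_profile P3"
    unfolding P3_def prof_triple
  proof (intro conjI)
    show "\<forall>i\<in>V \<union> S. strict_weak_order_on X (b3 i)"
    proof
      fix i assume i: "i \<in> V \<union> S"
      have "h i \<in> V" using hV[OF i] .
      hence "strict_weak_order_on X (ballot P (h i))" using wo by blast
      thus "strict_weak_order_on X (b3 i)" unfolding b3_def using i by simp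
    qed
    show "\<forall>i. i \<notin> V \<union> S \<longrightarrow> b3 i = {}" unfolding b3_def by simp
  qed (use fV fS neV fX neX in auto)
  have VS: "V \<inter> S = {}" using SV by auto
  have m3: "\<And>a b. margin P3 a b = 3 * margin P a b"
  proof -
    fix a b
    define g where "g = (\<lambda>i. mv (ballot P i) (a, b))"
    have "margin P3 a b = (\<Sum>i\<in>V \<union> S. mv (b3 i) (a, b))"
      using margin_sum[of P3 a b] fV fS unfolding P3_def voters_def ballot_def by simp
    also have "\<dots> = (\<Sum>i\<in>V \<union> S. g (h i))" unfolding b3_def g_def by simp
    also have "\<dots> = (\<Sum>i\<in>V. g (h i)) + (\<Sum>i\<in>S. g (h i))" by (rule sum.union_disjoint[OF fV fS VS])
    also have "(\<Sum>i\<in>V. g (h i)) = (\<Sum>i\<in>V. g i)" unfolding h_def by simp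
    also have "(\<Sum>i\<in>S. g (h i)) = (\<Sum>i\<in>S. g (fst (\<beta> i)))"
      using VS unfolding h_def by (intro sum.cong) auto
    also have "\<dots> = (\<Sum>q\<in>V \<times> {0::nat, 1}. g (fst q))"
      by (rule sum.reindex_bij_betw[OF bij, of "\<lambda>q. g (fst q)"])
    also have "\<dots> = (\<Sum>j\<in>V. \<Sum>k\<in>{0::nat, 1}. g j)" unfolding sum.cartesian_product by (simp add: case_prod_unfold)
    also have "\<dots> = 2 * (\<Sum>j\<in>V. g j)" by (simp add: sum_distrib_left)
    finally have "margin P3 a b = 3 * (\<Sum>j\<in>V. g j)" by simp
    moreover have "margin P a b = (\<Sum>j\<in>V. g j)" using margin_sum[of P a b] fV unfolding V_def g_def by simp
    ultimately show "margin P3 a b = 3 * margin P a b" by simp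
  qed
  have X3: "alts P3 = alts P" unfolding P3_def alts_def X_def by simp
  have posP: "\<And>a b. (a, b) \<in> margin_edges P \<Longrightarrow> margin P a b \<ge> 1" unfolding margin_edges_def by auto
  have g3: "ordinal_margin_graph P3 = ordinal_margin_graph P"
  proof (rule omg_eq[OF T X3])
    show "\<forall>a b. (a, b) \<in> margin_edges P \<longrightarrow> margin P3 a b > 0" using posP m3 by fastforce
    show "\<forall>a b c d. (a, b) \<in> margin_edges P \<longrightarrow> (c, d) \<in> margin_edges P \<longrightarrow> margin P a b > margin P c d
              \<longrightarrow> margin P3 a b > margin P3 c d" using m3 by simp
  qed
  have F3: "F P3 = F P" using omi prof3 prof g3 unfolding ordinal_margin_invariant_def by blast
  have "card (F P3) > 1" using gt F3 by simp
  then obtain i r where i: "i \<notin> voters P3" and r: "strict_weak_order_on (alts P3) r"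
    and c1: "card (F (insert i (voters P3), alts P3, (ballot P3)(i := r))) = 1"
    using svr prof3 unfolding single_voter_resolvable_def by blast
  define P4 where "P4 = (insert i (voters P3), alts P3, (ballot P3)(i := r))"
  have v3: "voters P3 = V \<union> S" and bP3: "ballot P3 = b3" unfolding P3_def voters_def ballot_def by simp_all
  have prof4: "is_profile P4"
    unfolding P4_def prof_triple
  proof (intro conjI)
    show "\<forall>j\<in>insert i (voters P3). strict_weak_order_on (alts P3) (((ballot P3)(i := r)) j)"
      using prof3 r unfolding is_profile_def by auto
    show "\<forall>j. j \<notin> insert i (voters P3) \<longrightarrow> ((ballot P3)(i := r)) j = {}"
      using prof3 unfolding is_profile_def by auto
  qed (use prof3 in \<open>auto simp: is_profile_def\<close>)
  have m4: "\<And>a b. margin P4 a b = margin P3 a b + mv r (a, b)"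
  proof -
    fix a b
    have "margin P4 a b = (\<Sum>j\<in>insert i (voters P3). mv (((ballot P3)(i := r)) j) (a, b))"
      using margin_sum[of P4 a b] fV fS v3 unfolding P4_def voters_def ballot_def by simp
    also have "\<dots> = mv r (a, b) + (\<Sum>j\<in>voters P3. mv (((ballot P3)(i := r)) j) (a, b))"
      using i fV fS v3 by simp
    also have "(\<Sum>j\<in>voters P3. mv (((ballot P3)(i := r)) j) (a, b)) = (\<Sum>j\<in>voters P3. mv (ballot P3 j) (a, b))"
      using i by (intro sum.cong) auto
    also have "\<dots> = margin P3 a b" using margin_sum[of P3 a b] fV fS v3 by simp
    finally show "margin P4 a b = margin P3 a b + mv r (a, b)" by simp
  qed
  have X4: "alts P4 = alts P" unfolding P4_def alts_def using X3 by (simp add: alts_def)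
  have g4: "ordinal_margin_graph P4 = ordinal_margin_graph P"
  proof (rule omg_eq[OF T X4])
    show "\<forall>a b. (a, b) \<in> margin_edges P \<longrightarrow> margin P4 a b > 0"
    proof (intro allI impI)
      fix a b assume "(a, b) \<in> margin_edges P"
      hence "margin P a b \<ge> 1" by (rule posP)
      moreover have "\<bar>mv r (a, b)\<bar> \<le> 1" by (rule mv_bound)
      ultimately show "margin P4 a b > 0" using m4 m3 by (simp add: abs_le_iff)
    qed
    show "\<forall>a b c d. (a, b) \<in> margin_edges P \<longrightarrow> (c, d) \<in> margin_edges P \<longrightarrow> margin P a b > margin P c d
              \<longrightarrow> margin P4 a b > margin P4 c d"
    proof (intro allI impI)
      fix a b c d assume "margin P a b > margin P c d"
      moreover have "\<bar>mv r (a, b)\<bar> \<le> 1" by (rule mv_bound)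
      moreover have "\<bar>mv r (c, d)\<bar> \<le> 1" by (rule mv_bound)
      ultimately show "margin P4 a b > margin P4 c d" using m4 m3 by (simp add: abs_le_iff)
    qed
  qed
  have "F P4 = F P" using omi prof4 prof g4 unfolding ordinal_margin_invariant_def by blast
  hence "card (F P) = 1" using c1 unfolding P4_def by simp
  thus False using gt by simp
qed

lemma decomp:
  fixes v :: "'a \<Rightarrow> int"
  assumes fL: "finite Lp" and inj: "inj_on rv Lp" and disj: "rv ` Lp \<inter> Lp = {}"
    and anti: "\<forall>p\<in>Lp. v (rv p) = - v p" and s: "s \<in> Lp \<union> rv ` Lp"
  shows "(\<Sum>p\<in>Lp. indf rv s p * v p) = v s"
proof (cases "s \<in> Lp")
  case True
  have "(\<Sum>p\<in>Lp. indf rv s p * v p) = indf rv s s * v s + (\<Sum>p\<in>Lp - {s}. indf rv s p * v p)"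
    using sum.remove[OF fL True] by simp
  also have "(\<Sum>p\<in>Lp - {s}. indf rv s p * v p) = 0"
  proof (rule sum.neutral, rule ballI)
    fix p assume p: "p \<in> Lp - {s}"
    have "s \<noteq> rv p" using disj True p by auto
    thus "indf rv s p * v p = 0" using p unfolding indf_def by auto
  qed
  finally show ?thesis unfolding indf_def by simp
next
  case False
  then obtain q where q: "q \<in> Lp" "s = rv q" using s by auto
  have "(\<Sum>p\<in>Lp. indf rv s p * v p) = indf rv s q * v q + (\<Sum>p\<in>Lp - {q}. indf rv s p * v p)"
    using sum.remove[OF fL q(1)] by simp
  also have "(\<Sum>p\<in>Lp - {q}. indf rv s p * v p) = 0"
  proof (rule sum.neutral, rule ballI)
    fix p assume p: "p \<in> Lp - {q}"
    have "s \<noteq> p" using False p by auto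
    moreover have "s \<noteq> rv p" using q p inj by (auto dest: inj_onD)
    ultimately show "indf rv s p * v p = 0" unfolding indf_def by auto
  qed
  also have "indf rv s q = -1" using q False unfolding indf_def by auto
  finally show ?thesis using anti q by simp
qed

lemma decomp_sum:
  fixes v :: "'a \<Rightarrow> int" and f :: "'i \<Rightarrow> 'a"
  assumes fL: "finite Lp" and inj: "inj_on rv Lp" and disj: "rv ` Lp \<inter> Lp = {}"
    and anti: "\<forall>p\<in>Lp. v (rv p) = - v p" and fV: "finite V" and f: "\<forall>i\<in>V. f i \<in> Lp \<union> rv ` Lp"
  shows "(\<Sum>i\<in>V. v (f i)) = (\<Sum>p\<in>Lp. (\<Sum>i\<in>V. indf rv (f i) p) * v p)"
proof -
  have "(\<Sum>i\<in>V. v (f i)) = (\<Sum>i\<in>V. \<Sum>p\<in>Lp. indf rv (f i) p * v p)"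
    using decomp[OF fL inj disj anti] f by (intro sum.cong) auto
  also have "\<dots> = (\<Sum>p\<in>Lp. \<Sum>i\<in>V. indf rv (f i) p * v p)" by (rule sum.swap)
  also have "\<dots> = (\<Sum>p\<in>Lp. (\<Sum>i\<in>V. indf rv (f i) p) * v p)" by (simp add: sum_distrib_right)
  finally show ?thesis .
qed

definition Lins :: "'x set \<Rightarrow> ('x \<times> 'x) set set" where
  "Lins X = {s. strict_linear_order_on X s}"

lemma Lins_finite: "finite X \<Longrightarrow> finite (Lins X)"
proof -
  assume fX: "finite X"
  have "Lins X \<subseteq> Pow (X \<times> X)" unfolding Lins_def
    using swo_D(1)[OF slo_D(1)] by blast
  thus ?thesis using fX by (simp add: finite_subset)
qed

lemma Lins_facts:
  assumes fX: "finite X" and x0: "x0 \<in> X" and x1: "x1 \<in> X" and ne: "x0 \<noteq> x1"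
  defines "Lp \<equiv> {s \<in> Lins X. (x0, x1) \<in> s}"
  shows "Lins X = Lp \<union> converse ` Lp" and "converse ` Lp \<inter> Lp = {}" and "inj_on converse Lp"
    and "Lp \<noteq> {}" and "finite Lp"
proof -
  show "finite Lp" unfolding Lp_def using Lins_finite[OF fX] by simp
  show "inj_on converse Lp" by (rule inj_onI) simp
  show L: "Lins X = Lp \<union> converse ` Lp"
  proof
    show "Lins X \<subseteq> Lp \<union> converse ` Lp"
    proof
      fix s assume s: "s \<in> Lins X"
      hence sl: "strict_linear_order_on X s" unfolding Lins_def by simp
      have "(x0, x1) \<in> s \<or> (x1, x0) \<in> s" using slo_D(2)[OF sl] x0 x1 ne by blast
      thus "s \<in> Lp \<union> converse ` Lp"
      proof
        assume "(x0, x1) \<in> s" thus ?thesis unfolding Lp_def using s by simp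
      next
        assume "(x1, x0) \<in> s"
        hence "s\<inverse> \<in> Lp" unfolding Lp_def Lins_def using slo_converse[OF sl] by simp
        hence "(s\<inverse>)\<inverse> \<in> converse ` Lp" by blast
        thus ?thesis by simp
      qed
    qed
    show "Lp \<union> converse ` Lp \<subseteq> Lins X" unfolding Lp_def Lins_def using slo_converse by auto
  qed
  show "converse ` Lp \<inter> Lp = {}"
  proof (rule ccontr)
    assume "converse ` Lp \<inter> Lp \<noteq> {}"
    then obtain s where s1: "s \<in> Lp" and s2: "s\<inverse> \<in> Lp" by auto
    have sl: "strict_linear_order_on X s" and a: "(x0, x1) \<in> s" using s1 unfolding Lp_def Lins_def by auto
    have b: "(x1, x0) \<in> s" using s2 unfolding Lp_def by auto
    have "(x0, x0) \<in> s" using swo_D(3)[OF slo_D(1)[OF sl], rule_format, of x0 x1 x0] a b x0 x1 by simp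
    thus False using swo_D(2)[OF slo_D(1)[OF sl]] x0 by auto
  qed
  show "Lp \<noteq> {}"
  proof -
    obtain s where sl: "strict_linear_order_on X s" using slo_exists[OF fX] by blast
    have "s \<in> Lins X" using sl unfolding Lins_def by simp
    hence "s \<in> Lp \<union> converse ` Lp" using L by simp
    thus ?thesis by auto
  qed
qed

definition psi :: "'v set \<Rightarrow> 'x set \<Rightarrow> ('v \<Rightarrow> ('x \<times> 'x) set) \<Rightarrow> ('v, 'x) profile" where
  "psi V X f = (V, X, \<lambda>i. if i \<in> V then f i else {})"

lemma psi_lin:
  assumes "finite V" "V \<noteq> {}" "finite X" "X \<noteq> {}" "f \<in> PiE V (\<lambda>_. Lins X)"
  shows "is_linear_profile (psi V X f)"
proof -
  have "\<forall>i\<in>V. strict_linear_order_on X (f i)" using assms(5) unfolding Lins_def by auto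
  thus ?thesis using assms unfolding is_linear_profile_def psi_def prof_triple
    by (auto dest: slo_D(1))
qed

lemma psi_inj: "inj_on (psi V X) (PiE V (\<lambda>_. Lins X))"
proof (rule inj_onI)
  fix f g assume f: "f \<in> PiE V (\<lambda>_. Lins X)" and g: "g \<in> PiE V (\<lambda>_. Lins X)" and eq: "psi V X f = psi V X g"
  have "\<And>i. i \<in> V \<Longrightarrow> f i = g i"
  proof -
    fix i assume i: "i \<in> V"
    have "(\<lambda>i. if i \<in> V then f i else {}) = (\<lambda>i. if i \<in> V then g i else {})" using eq unfolding psi_def by simp
    from fun_cong[OF this, of i] show "f i = g i" using i by simp
  qed
  thus "f = g" using f g by (rule PiE_ext[rotated 2]) auto
qed

lemma linprof_eq:
  assumes "finite V" "V \<noteq> {}" "finite X" "X \<noteq> {}"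
  shows "linear_profiles V X = psi V X ` PiE V (\<lambda>_. Lins X)"
proof
  show "psi V X ` PiE V (\<lambda>_. Lins X) \<subseteq> linear_profiles V X"
    unfolding linear_profiles_def using psi_lin[OF assms] by (auto simp: psi_def)
  show "linear_profiles V X \<subseteq> psi V X ` PiE V (\<lambda>_. Lins X)"
  proof
    fix Q assume Q: "Q \<in> linear_profiles V X"
    have lp: "is_linear_profile Q" and vQ: "voters Q = V" and aQ: "alts Q = X" using Q unfolding linear_profiles_def by auto
    have out: "\<forall>i. i \<notin> V \<longrightarrow> ballot Q i = {}" using lp vQ unfolding is_linear_profile_def is_profile_def by auto
    have lin: "\<forall>i\<in>V. strict_linear_order_on X (ballot Q i)" using lp vQ aQ unfolding is_linear_profile_def by auto
    have QQ: "Q = (V, X, ballot Q)" using vQ aQ unfolding voters_def alts_def ballot_def by (cases Q) auto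
    have bq: "(\<lambda>i. if i \<in> V then restrict (ballot Q) V i else {}) = ballot Q"
    proof
      fix i show "(if i \<in> V then restrict (ballot Q) V i else {}) = ballot Q i"
        using out by (cases "i \<in> V") simp_all
    qed
    have "Q = psi V X (restrict (ballot Q) V)"
      unfolding psi_def bq using QQ by simp
    moreover have "restrict (ballot Q) V \<in> PiE V (\<lambda>_. Lins X)" using lin unfolding Lins_def by auto
    ultimately show "Q \<in> psi V X ` PiE V (\<lambda>_. Lins X)" by blast
  qed
qed

lemma card_linprof:
  assumes "finite V" "V \<noteq> {}" "finite X" "X \<noteq> {}"
  shows "card (linear_profiles V X) = card (Lins X) ^ card V"
proof -
  have "card (linear_profiles V X) = card (PiE V (\<lambda>_. Lins X))"
    unfolding linprof_eq[OF assms] by (rule card_image[OF psi_inj])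
  also have "\<dots> = card (Lins X) ^ card V" using assms(1) by (simp add: card_PiE)
  finally show ?thesis .
qed

lemma margin_psi:
  assumes "finite V"
  shows "margin (psi V X f) a b = (\<Sum>i\<in>V. mv (f i) (a, b))"
proof -
  have "margin (psi V X f) a b = (\<Sum>i\<in>V. mv (ballot (psi V X f) i) (a, b))"
    using margin_sum[of "psi V X f" a b] assms unfolding psi_def by simp
  also have "\<dots> = (\<Sum>i\<in>V. mv (f i) (a, b))" unfolding psi_def by (intro sum.cong) auto
  finally show ?thesis .
qed

lemma y_exists:
  assumes prof: "is_profile P" and fL: "finite Lp" and inj: "inj_on converse Lp"
    and disj: "converse ` Lp \<inter> Lp = {}" and LL: "Lins (alts P) = Lp \<union> converse ` Lp"
  shows "\<exists>yint :: ('x \<times> 'x) set \<Rightarrow> int. \<forall>a b. (\<Sum>p\<in>Lp. yint p * mv p (a, b)) = 2 * margin P a b"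
proof -
  define X where "X = alts P"
  define V where "V = voters P"
  have fV: "finite V" and fX: "finite X"
    and wo: "\<forall>i\<in>V. strict_weak_order_on X (ballot P i)"
    using prof unfolding is_profile_def V_def X_def by auto
  obtain s0 where s0: "strict_linear_order_on X s0" using slo_exists[OF fX] by blast
  define L1 where "L1 = (\<lambda>i. linz X s0 (ballot P i))"
  define L2 where "L2 = (\<lambda>i. linz X (s0\<inverse>) (ballot P i))"
  have L1in: "\<forall>i\<in>V. L1 i \<in> Lp \<union> converse ` Lp"
    using wo linz_slo[OF _ s0] LL unfolding L1_def Lins_def X_def by blast
  have L2in: "\<forall>i\<in>V. L2 i \<in> Lp \<union> converse ` Lp"
    using wo linz_slo[OF _ slo_converse[OF s0]] LL unfolding L2_def Lins_def X_def by blast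
  define yint where "yint = (\<lambda>p. (\<Sum>i\<in>V. indf converse (L1 i) p) + (\<Sum>i\<in>V. indf converse (L2 i) p))"
  have "\<forall>a b. (\<Sum>p\<in>Lp. yint p * mv p (a, b)) = 2 * margin P a b"
  proof (intro allI)
    fix a b
    have anti: "\<forall>p\<in>Lp. mv (p\<inverse>) (a, b) = - mv p (a, b)" by (simp add: mv_converse)
    have "2 * margin P a b = (\<Sum>i\<in>V. 2 * mv (ballot P i) (a, b))"
      using margin_sum[of P a b] fV unfolding V_def by (simp add: sum_distrib_left)
    also have "\<dots> = (\<Sum>i\<in>V. mv (L1 i) (a, b) + mv (L2 i) (a, b))"
      using wo linz_mv[OF _ s0] unfolding L1_def L2_def by (intro sum.cong) auto
    also have "\<dots> = (\<Sum>i\<in>V. mv (L1 i) (a, b)) + (\<Sum>i\<in>V. mv (L2 i) (a, b))" by (rule sum.distrib)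
    also have "(\<Sum>i\<in>V. mv (L1 i) (a, b)) = (\<Sum>p\<in>Lp. (\<Sum>i\<in>V. indf converse (L1 i) p) * mv p (a, b))"
      by (rule decomp_sum[OF fL inj disj _ fV L1in, of "\<lambda>s. mv s (a, b)"]) (use anti in simp)
    also have "(\<Sum>i\<in>V. mv (L2 i) (a, b)) = (\<Sum>p\<in>Lp. (\<Sum>i\<in>V. indf converse (L2 i) p) * mv p (a, b))"
      by (rule decomp_sum[OF fL inj disj _ fV L2in, of "\<lambda>s. mv s (a, b)"]) (use anti in simp)
    finally show "(\<Sum>p\<in>Lp. yint p * mv p (a, b)) = 2 * margin P a b"
      unfolding yint_def by (simp add: distrib_left distrib_right sum.distrib)
  qed
  thus ?thesis by blast
qed

lemma approx:
  fixes W yint v :: "'a \<Rightarrow> int" and \<mu> \<rho> s :: real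
  assumes fL: "finite Lp" and vb: "\<forall>p\<in>Lp. \<bar>v p\<bar> \<le> 1"
    and close: "\<forall>p\<in>Lp. \<bar>real_of_int (W p) - s * (\<mu> * real_of_int (yint p))\<bar> \<le> \<rho> * s"
  shows "\<bar>real_of_int (\<Sum>p\<in>Lp. W p * v p) - \<mu> * s * real_of_int (\<Sum>p\<in>Lp. yint p * v p)\<bar> \<le> real (card Lp) * (\<rho> * s)"
proof -
  have "real_of_int (\<Sum>p\<in>Lp. W p * v p) - \<mu> * s * real_of_int (\<Sum>p\<in>Lp. yint p * v p)
      = (\<Sum>p\<in>Lp. (real_of_int (W p) - s * (\<mu> * real_of_int (yint p))) * real_of_int (v p))"
    by (simp add: sum_distrib_left sum_subtractf algebra_simps)
  also have "\<bar>\<dots>\<bar> \<le> (\<Sum>p\<in>Lp. \<bar>(real_of_int (W p) - s * (\<mu> * real_of_int (yint p))) * real_of_int (v p)\<bar>)"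
    by (rule sum_abs)
  also have "\<dots> \<le> (\<Sum>p\<in>Lp. \<rho> * s)"
  proof (rule sum_mono)
    fix p assume p: "p \<in> Lp"
    have a: "\<bar>real_of_int (W p) - s * (\<mu> * real_of_int (yint p))\<bar> \<le> \<rho> * s" using close p by simp
    have "-1 \<le> v p" "v p \<le> 1" using vb p by (auto simp: abs_le_iff)
    hence b: "\<bar>real_of_int (v p)\<bar> \<le> 1" by (simp add: abs_le_iff)
    have c: "0 \<le> \<rho> * s" using a by (meson abs_ge_zero order_trans)
    have "\<bar>(real_of_int (W p) - s * (\<mu> * real_of_int (yint p))) * real_of_int (v p)\<bar>
        = \<bar>real_of_int (W p) - s * (\<mu> * real_of_int (yint p))\<bar> * \<bar>real_of_int (v p)\<bar>" by (rule abs_mult)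
    also have "\<dots> \<le> (\<rho> * s) * 1" by (rule mult_mono[OF a b c abs_ge_zero])
    finally show "\<bar>(real_of_int (W p) - s * (\<mu> * real_of_int (yint p))) * real_of_int (v p)\<bar> \<le> \<rho> * s" by simp
  qed
  also have "\<dots> = real (card Lp) * (\<rho> * s)" by simp
  finally show ?thesis .
qed

lemma asym_case:
  fixes F :: "('v, 'x) profile \<Rightarrow> 'x set" and P :: "('v, 'x) profile"
  assumes inf: "infinite (UNIV :: 'v set)"
    and vm: "voting_method F"
    and omi: "ordinal_margin_invariant F"
    and ar: "asymptotically_resolvable F"
    and prof: "is_profile P"
    and T: "linearly_edge_ordered_tournament (ordinal_margin_graph P)"
    and gt: "card (F P) > 1"
  shows False
proof -
  define X where "X = alts P"
  have fX: "finite X" and neX: "X \<noteq> {}" using prof unfolding is_profile_def X_def by auto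
  have "F P \<noteq> {} \<and> F P \<subseteq> alts P" using vm prof unfolding voting_method_def by blast
  hence FX: "F P \<subseteq> X" unfolding X_def by simp
  have "card (F P) \<le> card X" using card_mono[OF fX FX] .
  hence cX: "card X \<ge> 2" using gt by simp
  obtain x0 where x0: "x0 \<in> X" using neX by auto
  have "card (X - {x0}) \<ge> 1" using cX x0 fX by (simp add: card_Diff_singleton)
  then obtain x1 where x1: "x1 \<in> X - {x0}" by (metis all_not_in_conv card.empty not_one_le_zero)
  hence x1X: "x1 \<in> X" and ne: "x0 \<noteq> x1" by auto
  define Lp where "Lp = {s \<in> Lins X. (x0, x1) \<in> s}"
  have LL: "Lins X = Lp \<union> converse ` Lp" and disj: "converse ` Lp \<inter> Lp = {}" and inj: "inj_on converse Lp"
    and neL: "Lp \<noteq> {}" and fL: "finite Lp"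
    using Lins_facts[OF fX x0 x1X ne] unfolding Lp_def by auto
  define N where "N = card Lp"
  have N1: "N \<ge> 1" unfolding N_def using fL neL by (simp add: Suc_le_eq card_gt_0_iff)
  obtain yint :: "('x \<times> 'x) set \<Rightarrow> int" where Y: "\<forall>a b. (\<Sum>p\<in>Lp. yint p * mv p (a, b)) = 2 * margin P a b"
    using y_exists[OF prof fL inj disj] LL unfolding X_def by blast
  define B where "B = 1 + (\<Sum>p\<in>Lp. \<bar>real_of_int (yint p)\<bar>)"
  have B1: "B \<ge> 1" unfolding B_def by (simp add: sum_nonneg)
  define sq where "sq = sqrt (real (12 * N))"
  have sq0: "sq > 0" unfolding sq_def using N1 by simp
  define \<mu> where "\<mu> = 1 / (4 * B * sq)"
  have mu0: "\<mu> > 0" unfolding \<mu>_def using B1 sq0 by simp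
  define \<rho> where "\<rho> = \<mu> / (4 * real N)"
  have rho0: "\<rho> > 0" unfolding \<rho>_def using mu0 N1 by simp
  define yr where "yr = (\<lambda>p. \<mu> * real_of_int (yint p))"
  have hyp: "\<forall>p\<in>Lp. (\<bar>yr p\<bar> + \<rho>) * sqrt (real (12 * card Lp)) \<le> 1/2"
  proof
    fix p assume p: "p \<in> Lp"
    have "\<bar>real_of_int (yint p)\<bar> \<le> (\<Sum>p\<in>Lp. \<bar>real_of_int (yint p)\<bar>)"
      by (rule member_le_sum[OF p]) (auto simp: fL)
    hence yB: "\<bar>real_of_int (yint p)\<bar> \<le> B" unfolding B_def by simp
    have "\<bar>yr p\<bar> = \<mu> * \<bar>real_of_int (yint p)\<bar>" unfolding yr_def using mu0 by (simp add: abs_mult)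
    also have "\<dots> \<le> \<mu> * B" using yB mu0 by (simp add: mult_left_mono)
    finally have a: "\<bar>yr p\<bar> \<le> \<mu> * B" .
    have "\<rho> \<le> \<mu>" unfolding \<rho>_def using mu0 N1 by (simp add: divide_simps)
    also have "\<mu> \<le> \<mu> * B" using mu0 B1 by simp
    finally have b: "\<rho> \<le> \<mu> * B" .
    have "(\<bar>yr p\<bar> + \<rho>) * sq \<le> (2 * (\<mu> * B)) * sq" using a b sq0 by (intro mult_right_mono) auto
    also have "\<dots> = 1/2" unfolding \<mu>_def using B1 sq0 by simp
    finally show "(\<bar>yr p\<bar> + \<rho>) * sqrt (real (12 * card Lp)) \<le> 1/2" unfolding sq_def N_def .
  qed
  obtain \<delta> n0 where d0: "\<delta> > 0" and box: "\<forall>V::'v set. finite V \<and> card V \<ge> n0 \<longrightarrow>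
     real (card {f \<in> PiE V (\<lambda>_. Lp \<union> converse ` Lp). \<forall>p\<in>Lp.
        \<bar>real_of_int (\<Sum>i\<in>V. indf converse (f i) p) - sqrt (real (card V)) * yr p\<bar> \<le> \<rho> * sqrt (real (card V))})
     \<ge> \<delta> * real (card (Lp \<union> converse ` Lp)) ^ card V"
    using box_lemma[OF fL neL inj disj rho0 hyp] by blast
  obtain vs :: "nat \<Rightarrow> 'v" where vs: "inj vs" using infinite_countable_subset[OF inf] by blast
  have lim: "(\<lambda>n. real (card {Q \<in> linear_profiles (vs ` {..<n}) X. card (F Q) > 1})
              / real (card (linear_profiles (vs ` {..<n}) X))) \<longlonglongrightarrow> 0"
    using ar unfolding asymptotically_resolvable_def using fX vs cX by auto
  have "\<forall>\<^sub>F n in sequentially. real (card {Q \<in> linear_profiles (vs ` {..<n}) X. card (F Q) > 1})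
              / real (card (linear_profiles (vs ` {..<n}) X)) < \<delta>"
    using order_tendstoD(2)[OF lim d0] .
  then obtain n1 where n1: "\<And>n. n \<ge> n1 \<Longrightarrow> real (card {Q \<in> linear_profiles (vs ` {..<n}) X. card (F Q) > 1})
              / real (card (linear_profiles (vs ` {..<n}) X)) < \<delta>"
    unfolding eventually_sequentially by blast
  define n where "n = max (max n0 n1) 1"
  define V where "V = vs ` {..<n}"
  have cV: "card V = n" unfolding V_def using card_image[OF inj_on_subset[OF vs]] by simp
  have fV: "finite V" unfolding V_def by simp
  have n1': "n \<ge> 1" unfolding n_def by simp
  have neV: "V \<noteq> {}" using cV n1' by auto
  define Fset where "Fset = {f \<in> PiE V (\<lambda>_. Lp \<union> converse ` Lp). \<forall>p\<in>Lp.
        \<bar>real_of_int (\<Sum>i\<in>V. indf converse (f i) p) - sqrt (real (card V)) * yr p\<bar> \<le> \<rho> * sqrt (real (card V))}"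
  have "n0 \<le> card V" using cV unfolding n_def by simp
  hence cF0: "real (card Fset) \<ge> \<delta> * real (card (Lp \<union> converse ` Lp)) ^ card V"
    using box fV unfolding Fset_def by blast
  have cF: "real (card Fset) \<ge> \<delta> * real (card (Lins X)) ^ n" using cF0 unfolding LL cV .
  have good: "\<And>f. f \<in> Fset \<Longrightarrow> card (F (psi V X f)) > 1"
  proof -
    fix f assume f: "f \<in> Fset"
    have fP: "f \<in> PiE V (\<lambda>_. Lins X)" using f unfolding Fset_def LL by simp
    have fin: "\<forall>i\<in>V. f i \<in> Lp \<union> converse ` Lp" using fP LL by auto
    have lp: "is_linear_profile (psi V X f)" by (rule psi_lin[OF fV neV fX neX fP])
    hence prof_f: "is_profile (psi V X f)" unfolding is_linear_profile_def by simp
    define s where "s = sqrt (real n)"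
    have s0: "s > 0" unfolding s_def using n1' by simp
    have key: "\<And>a b. \<bar>real_of_int (margin (psi V X f) a b) - 2 * \<mu> * s * real_of_int (margin P a b)\<bar> \<le> \<mu> * s / 4"
    proof -
      fix a b
      have anti: "\<forall>p\<in>Lp. mv (p\<inverse>) (a, b) = - mv p (a, b)" by (simp add: mv_converse)
      have m: "margin (psi V X f) a b = (\<Sum>p\<in>Lp. (\<Sum>i\<in>V. indf converse (f i) p) * mv p (a, b))"
        using margin_psi[OF fV, of X f a b] decomp_sum[OF fL inj disj _ fV fin, of "\<lambda>s. mv s (a, b)"] anti by simp
      have close: "\<forall>p\<in>Lp. \<bar>real_of_int (\<Sum>i\<in>V. indf converse (f i) p) - s * (\<mu> * real_of_int (yint p))\<bar> \<le> \<rho> * s"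
        using f cV unfolding Fset_def yr_def s_def by simp
      have vb: "\<forall>p\<in>Lp. \<bar>mv p (a, b)\<bar> \<le> 1" by (simp add: mv_bound)
      have A: "\<bar>real_of_int (\<Sum>p\<in>Lp. (\<Sum>i\<in>V. indf converse (f i) p) * mv p (a, b))
             - \<mu> * s * real_of_int (\<Sum>p\<in>Lp. yint p * mv p (a, b))\<bar> \<le> real (card Lp) * (\<rho> * s)"
        by (rule approx[OF fL vb close])
      have NR: "real (card Lp) * (\<rho> * s) = \<mu> * s / 4" unfolding \<rho>_def N_def[symmetric] using N1 by simp
      have e1: "real_of_int (margin (psi V X f) a b) = real_of_int (\<Sum>p\<in>Lp. (\<Sum>i\<in>V. indf converse (f i) p) * mv p (a, b))"
        using m by simp
      have e3: "2 * \<mu> * s * real_of_int (margin P a b) = \<mu> * s * real_of_int (\<Sum>p\<in>Lp. yint p * mv p (a, b))"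
        using Y by simp
      show "\<bar>real_of_int (margin (psi V X f) a b) - 2 * \<mu> * s * real_of_int (margin P a b)\<bar> \<le> \<mu> * s / 4"
        unfolding e1 e3 using A unfolding NR .
    qed
    define t where "t = \<mu> * s"
    have t0: "t > 0" unfolding t_def using mu0 s0 by simp
    have key': "\<And>a b. real_of_int (margin (psi V X f) a b) \<ge> 2 * t * real_of_int (margin P a b) - t / 4
         \<and> real_of_int (margin (psi V X f) a b) \<le> 2 * t * real_of_int (margin P a b) + t / 4"
    proof -
      fix a b
      have k: "\<bar>real_of_int (margin (psi V X f) a b) - 2 * t * real_of_int (margin P a b)\<bar> \<le> t / 4"
        using key[of a b] unfolding t_def by (simp add: mult.assoc)
      show "real_of_int (margin (psi V X f) a b) \<ge> 2 * t * real_of_int (margin P a b) - t / 4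
         \<and> real_of_int (margin (psi V X f) a b) \<le> 2 * t * real_of_int (margin P a b) + t / 4"
        using abs_le_D1[OF k] abs_le_D2[OF k] by linarith
    qed
    have XQ: "alts (psi V X f) = alts P" unfolding psi_def X_def by simp
    have g: "ordinal_margin_graph (psi V X f) = ordinal_margin_graph P"
    proof (rule omg_eq[OF T XQ])
      show "\<forall>a b. (a, b) \<in> margin_edges P \<longrightarrow> margin (psi V X f) a b > 0"
      proof (intro allI impI)
        fix a b assume "(a, b) \<in> margin_edges P"
        hence m1: "real_of_int (margin P a b) \<ge> 1" unfolding margin_edges_def by simp
        have "2 * t * real_of_int (margin P a b) \<ge> 2 * t * 1"
          using mult_left_mono[OF m1, of "2 * t"] t0 by simp
        hence "real_of_int (margin (psi V X f) a b) > 0" using key'[of a b] t0 by linarith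
        thus "margin (psi V X f) a b > 0" by simp
      qed
      show "\<forall>a b c d. (a, b) \<in> margin_edges P \<longrightarrow> (c, d) \<in> margin_edges P \<longrightarrow> margin P a b > margin P c d
              \<longrightarrow> margin (psi V X f) a b > margin (psi V X f) c d"
      proof (intro allI impI)
        fix a b c d assume "margin P a b > margin P c d"
        hence m1: "real_of_int (margin P a b) - real_of_int (margin P c d) \<ge> 1" by linarith
        have "2 * t * (real_of_int (margin P a b) - real_of_int (margin P c d)) \<ge> 2 * t * 1"
          using mult_left_mono[OF m1, of "2 * t"] t0 by simp
        moreover have "2 * t * (real_of_int (margin P a b) - real_of_int (margin P c d))
            = 2 * t * real_of_int (margin P a b) - 2 * t * real_of_int (margin P c d)" by (simp add: right_diff_distrib)
        ultimately have "real_of_int (margin (psi V X f) a b) > real_of_int (margin (psi V X f) c d)"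
          using key'[of a b] key'[of c d] t0 by linarith
        thus "margin (psi V X f) a b > margin (psi V X f) c d" by simp
      qed
    qed
    have "F (psi V X f) = F P" using omi prof_f prof g unfolding ordinal_margin_invariant_def by blast
    thus "card (F (psi V X f)) > 1" using gt by simp
  qed
  define Good where "Good = {Q \<in> linear_profiles V X. card (F Q) > 1}"
  have sub: "psi V X ` Fset \<subseteq> Good"
  proof
    fix Q assume "Q \<in> psi V X ` Fset"
    then obtain f where f: "f \<in> Fset" "Q = psi V X f" by auto
    have fP: "f \<in> PiE V (\<lambda>_. Lins X)" using f unfolding Fset_def LL by simp
    have "Q \<in> linear_profiles V X" using f fP linprof_eq[OF fV neV fX neX] by auto
    thus "Q \<in> Good" unfolding Good_def using good f by simp
  qed
  have fG: "finite Good"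
  proof -
    have "linear_profiles V X = psi V X ` PiE V (\<lambda>_. Lins X)" by (rule linprof_eq[OF fV neV fX neX])
    moreover have "finite (PiE V (\<lambda>_. Lins X))" using fV Lins_finite[OF fX] by (simp add: finite_PiE)
    ultimately show ?thesis unfolding Good_def by simp
  qed
  have injF: "inj_on (psi V X) Fset"
    by (rule inj_on_subset[OF psi_inj]) (auto simp: Fset_def LL)
  have "card Fset = card (psi V X ` Fset)" using card_image[OF injF] by simp
  also have "\<dots> \<le> card Good" by (rule card_mono[OF fG sub])
  finally have cG: "real (card Good) \<ge> \<delta> * real (card (Lins X)) ^ n" using cF by linarith
  have cL: "card (linear_profiles V X) = card (Lins X) ^ n" using card_linprof[OF fV neV fX neX] cV by simp
  have Lpos: "card (Lins X) > 0" using LL neL fL Lins_finite[OF fX] by (auto simp: card_gt_0_iff)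
  have "real (card Good) / real (card (linear_profiles V X)) \<ge> \<delta>"
    using cG cL Lpos by (simp add: divide_simps)
  moreover have "real (card Good) / real (card (linear_profiles V X)) < \<delta>"
    using n1[of n] unfolding Good_def V_def n_def by simp
  ultimately show False by simp
qed

theorem lemma2:
  fixes F :: "('v, 'x) profile \<Rightarrow> 'x set" and P :: "('v, 'x) profile"
  assumes "infinite (UNIV :: 'x set)" and "infinite (UNIV :: 'v set)"
    and "voting_method F"
    and "ordinal_margin_invariant F"
    and "single_voter_resolvable F \<or> asymptotically_resolvable F"
    and "is_profile P"
    and "linearly_edge_ordered_tournament (ordinal_margin_graph P)"
  shows "card (F P) = 1"
proof (rule ccontr)
  assume ne1: "card (F P) \<noteq> 1"
  have "F P \<noteq> {} \<and> F P \<subseteq> alts P" using assms(3,6) unfolding voting_method_def by blast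
  moreover have "finite (alts P)" using assms(6) unfolding is_profile_def by simp
  ultimately have "card (F P) > 0" by (meson card_gt_0_iff finite_subset)
  hence gt: "card (F P) > 1" using ne1 by simp
  from assms(5) show False
  proof
    assume "single_voter_resolvable F"
    thus False using single_case[OF assms(2) assms(4) _ assms(6) assms(7) gt] by blast
  next
    assume "asymptotically_resolvable F"
    thus False using asym_case[OF assms(2) assms(3) assms(4) _ assms(6) assms(7) gt] by blast
  qed
qed

end
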